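(* Let $x$ be a large parameter and let $z > \exp(3\lambda \log \log \lambda)$. As $x \to \infty$, \[ \sum_{m \leq z} \frac{t(m)}{\sqrt{m}} \sim \prod_p \left(1 + \frac{t(p)}{\sqrt{p}}\right) = \exp\left((1 + o(1)) \frac{\lambda}{2\log \lambda}\right).\] Also, with $\alpha = (\log \lambda)^{-3}$, \[ x^{-\alpha} \sum_{\substack{m_1, m_2 \leq z\\ (m_1, m_2) = 1}}\frac{r(m_1)r(m_2)}{(m_1m_2)^{\frac{1}{2}-\alpha}}\sum_{(d, m_1m_2) = 1}r(d)^2d^\alpha \Bigg/ \left(\left(\sum_{m \leq x} \frac{t(m)}{\sqrt{m}}\right)^2 \sum_d r(d)^2\right) \leq \exp\left(-(1 + o(1))\frac{32 \log x}{(\log\log x)^4}\right).\]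
   Context: Let $x$ be large and $\lambda = \sqrt{\log x \log\log x}$. Define the multiplicative function $r$ by $r(p) = \frac{\lambda}{\sqrt{p}\log p}$ for primes $\lambda^2 \le p \le \exp((\log\lambda)^2)$, $r(p)=0$ for other primes, and $r(p^n)=0$ for $n\ge2$. Define the multiplicative function $t$ by $t(p^n) = \frac{r(p^n)}{1+r(p^n)^2}$. Products over $p$ are over primes. *)

theory Defs
  imports "HOL-Analysis.Analysis" "HOL-Library.Landau_Symbols" "HOL-Computational_Algebra.Primes"
begin

definition lam :: "real \<Rightarrow> real" where
  "lam x = sqrt (ln x * ln (ln x))"

definition r_prime :: "real \<Rightarrow> nat \<Rightarrow> real" where
  "r_prime x p = (if prime p \<and> lam x ^ 2 \<le> real p \<and> real p \<le> exp ((ln (lam x))^2)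
                  then lam x / (sqrt (real p) * ln (real p)) else 0)"

definition r_pp :: "real \<Rightarrow> nat \<Rightarrow> nat \<Rightarrow> real" where
  "r_pp x p k = (if k = 1 then r_prime x p else 0)"

definition r :: "real \<Rightarrow> nat \<Rightarrow> real" where
  "r x n = (if n = 0 then 0 else \<Prod>p\<in>prime_factors n. r_pp x p (multiplicity p n))"

definition t_pp :: "real \<Rightarrow> nat \<Rightarrow> nat \<Rightarrow> real" where
  "t_pp x p k = r x (p ^ k) / (1 + (r x (p ^ k))^2)"

definition t :: "real \<Rightarrow> nat \<Rightarrow> real" where
  "t x n = (if n = 0 then 0 else \<Prod>p\<in>prime_factors n. t_pp x p (multiplicity p n))"

end

theory Submission
  imports Defs "HOL-Real_Asymp.Real_Asymp"
begin

definition primes_le :: "nat \<Rightarrow> nat set" where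
  "primes_le n = {p. prime p \<and> p \<le> n}"

lemma finite_primes_le [simp]: "finite (primes_le n)"
  unfolding primes_le_def by (rule finite_subset[of _ "{..n}"]) auto

definition theta :: "nat \<Rightarrow> real" where
  "theta n = (\<Sum>p\<in>primes_le n. ln (real p))"

definition mert :: "nat \<Rightarrow> real" where
  "mert n = (\<Sum>p\<in>primes_le n. ln (real p) / real p)"

lemma ln_as_mult_sum:
  fixes m :: nat
  assumes "m > 0" "finite Q" "prime_factors m \<subseteq> Q" "\<forall>p\<in>Q. prime p"
  shows "ln (real m) = (\<Sum>p\<in>Q. real (multiplicity p m) * ln (real p))"
proof -
  have "real m = real (\<Prod>p\<in>prime_factors m. p ^ multiplicity p m)"
    using prime_factorization_nat[OF assms(1)] by simp
  also have "\<dots> = (\<Prod>p\<in>prime_factors m. real p ^ multiplicity p m)" by simp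
  finally have "ln (real m) = ln (\<Prod>p\<in>prime_factors m. real p ^ multiplicity p m)" by simp
  also have "\<dots> = (\<Sum>p\<in>prime_factors m. ln (real p ^ multiplicity p m))"
    by (rule ln_prod) (auto dest: in_prime_factors_imp_prime simp: prime_gt_0_nat)
  also have "\<dots> = (\<Sum>p\<in>prime_factors m. real (multiplicity p m) * ln (real p))"
    by (intro sum.cong refl) (auto dest: in_prime_factors_imp_prime simp: prime_gt_0_nat ln_realpow)
  also have "\<dots> = (\<Sum>p\<in>Q. real (multiplicity p m) * ln (real p))"
  proof (rule sum.mono_neutral_left[OF assms(2) assms(3)])
    show "\<forall>i\<in>Q - prime_factors m. real (multiplicity i m) * ln (real i) = 0"
    proof
      fix i assume i: "i \<in> Q - prime_factors m"
      hence "prime i" using assms(4) by auto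
      hence "\<not> i dvd m" using i assms(1) by (auto simp: prime_factors_dvd)
      hence "multiplicity i m = 0" by (simp add: not_dvd_imp_multiplicity_0)
      thus "real (multiplicity i m) * ln (real i) = 0" by simp
    qed
  qed
  finally show ?thesis .
qed

lemma ln_fact_sum:
  "ln (fact n :: real) = (\<Sum>p\<in>primes_le n. real (multiplicity p (fact n :: nat)) * ln (real p))"
proof -
  have "ln (fact n :: real) = ln (real (fact n :: nat))" by (simp add: of_nat_fact)
  also have "\<dots> = (\<Sum>p\<in>primes_le n. real (multiplicity p (fact n :: nat)) * ln (real p))"
    by (rule ln_as_mult_sum) (auto simp: primes_le_def prime_factors_dvd prime_dvd_fact_iff)
  finally show ?thesis .
qed

lemma mult_le_self:
  fixes p m :: nat
  assumes "prime p" "m > 0"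
  shows "multiplicity p m \<le> m"
proof -
  have "p ^ multiplicity p m dvd m" by (rule multiplicity_dvd)
  hence "p ^ multiplicity p m \<le> m" using assms by (intro dvd_imp_le) auto
  moreover have "multiplicity p m < p ^ multiplicity p m"
    using prime_ge_2_nat[OF assms(1)] by (intro less_exp[THEN less_le_trans]) (auto intro!: power_mono)
  ultimately show ?thesis by simp
qed

lemma mult_card:
  fixes p m :: nat
  assumes "prime p" "m > 0" "multiplicity p m \<le> M"
  shows "multiplicity p m = card {k\<in>{1..M}. p ^ k dvd m}"
proof -
  have "{k\<in>{1..M}. p ^ k dvd m} = {1..multiplicity p m}"
  proof -
    have "\<not> is_unit p" using prime_gt_1_nat[OF assms(1)] by auto
    thus ?thesis using assms by (auto simp: power_dvd_iff_le_multiplicity)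
  qed
  thus ?thesis by simp
qed

lemma Suc_div_split:
  fixes n d :: nat
  assumes "d > 0"
  shows "Suc n div d = n div d + (if d dvd Suc n then 1 else 0)"
  using assms by (auto simp: div_Suc mod_eq_0_iff_dvd)

lemma mult_fact:
  fixes p :: nat
  assumes "prime p"
  shows "multiplicity p (fact n) = (\<Sum>k\<in>{1..n}. n div p ^ k)"
proof (induction n)
  case 0
  then show ?case by simp
next
  case (Suc n)
  have p0: "p > 1" using assms prime_gt_1_nat by auto
  have "multiplicity p (fact (Suc n) :: nat) = multiplicity p (Suc n) + multiplicity p (fact n :: nat)"
    unfolding fact_Suc of_nat_id
    by (rule prime_elem_multiplicity_mult_distrib) (use assms in auto)
  also have "multiplicity p (Suc n) = card {k\<in>{1..Suc n}. p ^ k dvd Suc n}"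
    by (rule mult_card[OF assms]) (auto intro: mult_le_self[OF assms])
  also have "\<dots> = (\<Sum>k\<in>{1..Suc n}. if p ^ k dvd Suc n then 1 else 0)"
    using sum.inter_filter[of "{1..Suc n}" "\<lambda>_. 1::nat" "\<lambda>k. p^k dvd Suc n"] by simp
  finally have A: "multiplicity p (fact (Suc n) :: nat) = (\<Sum>k\<in>{1..Suc n}. if p ^ k dvd Suc n then 1 else 0) + multiplicity p (fact n :: nat)" .
  have "(\<Sum>k\<in>{1..Suc n}. Suc n div p ^ k) = (\<Sum>k\<in>{1..Suc n}. n div p ^ k + (if p ^ k dvd Suc n then 1 else 0))"
    using p0 by (intro sum.cong refl Suc_div_split) auto
  also have "\<dots> = (\<Sum>k\<in>{1..Suc n}. n div p ^ k) + (\<Sum>k\<in>{1..Suc n}. if p ^ k dvd Suc n then 1 else 0)"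
    by (rule sum.distrib)
  also have "(\<Sum>k\<in>{1..Suc n}. n div p ^ k) = (\<Sum>k\<in>{1..n}. n div p ^ k)"
  proof -
    have "n < 2 ^ Suc n" by (meson less_exp Suc_lessD less_trans_Suc lessI less_le_trans order.refl) 
    also have "(2::nat) ^ Suc n \<le> p ^ Suc n" using p0 by (intro power_mono) auto
    finally have "n div p ^ Suc n = 0" by simp
    thus ?thesis by simp
  qed
  finally show ?case using Suc A by simp
qed

lemma vp_lower:
  fixes p :: nat assumes "prime p"
  shows "n div p \<le> multiplicity p (fact n :: nat)"
proof (cases "n = 0")
  case False
  have "n div p = n div p ^ 1" by simp
  also have "\<dots> \<le> (\<Sum>k\<in>{1..n}. n div p ^ k)"
    using False by (intro member_le_sum) auto
  finally show ?thesis using mult_fact[OF assms] by simp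
qed simp

lemma geom_sum_inv:
  fixes p :: real assumes "p > 1"
  shows "(\<Sum>k\<in>{1..n}. (1/p) ^ k) = (1 - (1/p) ^ n) / (p - 1)"
proof (induction n)
  case 0 then show ?case by simp
next
  case (Suc n)
  have "{1..Suc n} = insert (Suc n) {1..n}" by auto
  hence "(\<Sum>k\<in>{1..Suc n}. (1/p) ^ k) = (1/p)^Suc n + (\<Sum>k\<in>{1..n}. (1/p) ^ k)" by simp
  also have "\<dots> = (1/p)^Suc n + (1 - (1/p) ^ n) / (p - 1)" using Suc by simp
  also have "\<dots> = (1 - (1/p) ^ Suc n) / (p - 1)" using assms
    by (simp add: field_simps power_Suc)
  finally show ?case .
qed

lemma vp_upper:
  fixes p :: nat assumes "prime p"
  shows "real (multiplicity p (fact n :: nat)) \<le> real n / (real p - 1)"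
proof -
  have p1: "real p > 1" using prime_gt_1_nat[OF assms] by simp
  have "real (multiplicity p (fact n :: nat)) = (\<Sum>k\<in>{1..n}. real (n div p ^ k))"
    using mult_fact[OF assms] by simp
  also have "\<dots> \<le> (\<Sum>k\<in>{1..n}. real n * (1 / real p) ^ k)"
  proof (intro sum_mono)
    fix k assume "k \<in> {1..n}"
    have "real (n div p ^ k) \<le> real n / real (p ^ k)" by (rule of_nat_div_le_of_nat)
    also have "\<dots> = real n * (1 / real p) ^ k" by (simp add: power_divide)
    finally show "real (n div p ^ k) \<le> real n * (1 / real p) ^ k" .
  qed
  also have "\<dots> = real n * (\<Sum>k\<in>{1..n}. (1 / real p) ^ k)"
    by (rule sum_distrib_left[symmetric])
  also have "\<dots> = real n * ((1 - (1/real p) ^ n) / (real p - 1))"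
    by (subst geom_sum_inv[OF p1]) (rule refl)
  also have "\<dots> \<le> real n * (1 / (real p - 1))"
    using p1 by (intro mult_left_mono divide_right_mono) auto
  finally show ?thesis by simp
qed

lemma ln_fact_upper: "ln (fact n :: real) \<le> real n * ln (real n)"
proof (cases "n = 0")
  case False
  have "(fact n :: real) \<le> real n ^ n"
    by (metis fact_le_power of_nat_fact of_nat_le_iff of_nat_power)
  hence "ln (fact n :: real) \<le> ln (real n ^ n)" using False by (intro ln_mono) auto
  thus ?thesis using False by (simp add: ln_realpow)
qed simp

lemma ln_fact_lower: "ln (fact n :: real) \<ge> real n * ln (real n) - real n"
proof (induction n)
  case 0 then show ?case by simp
next
  case (Suc n)
  show ?case
  proof (cases "n = 0")
    case True then show ?thesis by simp
  next
    case False
    have "ln (fact (Suc n) :: real) = ln (real (Suc n)) + ln (fact n)"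
      by (simp add: ln_mult del: of_nat_Suc)
    have key: "real n * ln (real (Suc n)) \<le> real n * ln (real n) + 1"
    proof -
      have "ln (real (Suc n)) - ln (real n) = ln (real (Suc n) / real n)"
        using False by (simp add: ln_div)
      also have "\<dots> \<le> real (Suc n) / real n - 1" using False by (intro ln_le_minus_one) auto
      also have "\<dots> = 1 / real n" using False by (simp add: field_simps)
      finally have "real n * (ln (real (Suc n)) - ln (real n)) \<le> real n * (1 / real n)"
        by (intro mult_left_mono) auto
      thus ?thesis using False by (simp add: algebra_simps)
    qed
    have "ln (fact (Suc n) :: real) = ln (real (Suc n)) + ln (fact n)"
      by (simp add: ln_mult del: of_nat_Suc)
    also have "\<dots> \<ge> ln (real (Suc n)) + (real n * ln (real n) - real n)" using Suc by simp
    finally show ?thesis using key by (simp add: algebra_simps)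
  qed
qed

lemma binom_prime_dvd:
  fixes p n :: nat
  assumes "prime p" "n < p" "p \<le> 2 * n"
  shows "p dvd (2 * n choose n)"
proof -
  have "fact n * fact (2*n - n) * (2*n choose n) = (fact (2*n) :: nat)"
    by (rule binomial_fact_lemma) simp
  hence eq: "fact n * fact n * (2*n choose n) = (fact (2*n) :: nat)" by simp
  have "p dvd (fact (2*n) :: nat)" using assms by (simp add: prime_dvd_fact_iff)
  hence "p dvd fact n * fact n * (2*n choose n)" by (subst eq)
  moreover have "\<not> p dvd (fact n :: nat)" using assms by (simp add: prime_dvd_fact_iff)
  ultimately show ?thesis using assms(1) by (auto simp: prime_dvd_mult_iff)
qed

lemma theta_mono: "m \<le> n \<Longrightarrow> theta m \<le> theta n"
  unfolding theta_def
  by (intro sum_mono2) (auto simp: primes_le_def dest: prime_gt_1_nat)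

lemma theta_double: "theta (2 * n) - theta n \<le> 2 * real n * ln 2"
proof -
  define C where "C = (2 * n choose n)"
  have C0: "C > 0" unfolding C_def by simp
  have "ln (real C) = (\<Sum>p\<in>primes_le (2*n). real (multiplicity p C) * ln (real p))"
  proof (rule ln_as_mult_sum[OF C0])
    show "prime_factors C \<subseteq> primes_le (2 * n)"
    proof
      fix p assume p: "p \<in> prime_factors C"
      hence pp: "prime p" "p dvd C" using C0 by (auto simp: prime_factors_dvd)
      have "C dvd (fact (2*n) :: nat)"
        using binomial_fact_lemma[of n "2*n"] unfolding C_def
        by (metis dvd_triv_right le_add2 mult_2)
      hence "p dvd (fact (2*n) :: nat)" using pp(2) by (rule dvd_trans[rotated])
      thus "p \<in> primes_le (2*n)" using pp by (simp add: primes_le_def prime_dvd_fact_iff)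
    qed
  qed (auto simp: primes_le_def)
  also have "\<dots> \<ge> (\<Sum>p\<in>primes_le (2*n) - primes_le n. ln (real p))"
  proof -
    have "(\<Sum>p\<in>primes_le (2*n) - primes_le n. ln (real p))
          \<le> (\<Sum>p\<in>primes_le (2*n) - primes_le n. real (multiplicity p C) * ln (real p))"
    proof (intro sum_mono)
      fix p assume p: "p \<in> primes_le (2*n) - primes_le n"
      hence pp: "prime p" "n < p" "p \<le> 2*n" by (auto simp: primes_le_def)
      have "p dvd C" unfolding C_def by (rule binom_prime_dvd[OF pp])
      hence "multiplicity p C \<ge> 1" using C0 pp(1)
        by (intro multiplicity_geI) (auto simp: prime_gt_1_nat)
      moreover have "ln (real p) \<ge> 0" using prime_gt_0_nat[OF pp(1)] by simp
      ultimately show "ln (real p) \<le> real (multiplicity p C) * ln (real p)"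
        by (metis mult_le_cancel_right1 of_nat_1 of_nat_le_iff order.strict_iff_not)
    qed
    also have "\<dots> \<le> (\<Sum>p\<in>primes_le (2*n). real (multiplicity p C) * ln (real p))"
      by (intro sum_mono2) (auto simp: primes_le_def Suc_le_eq prime_gt_0_nat)
    finally show ?thesis .
  qed
  finally have A: "(\<Sum>p\<in>primes_le (2*n) - primes_le n. ln (real p)) \<le> ln (real C)" .
  have "theta (2*n) - theta n = (\<Sum>p\<in>primes_le (2*n) - primes_le n. ln (real p))"
    unfolding theta_def
    by (subst sum_diff) (auto simp: primes_le_def)
  also have "\<dots> \<le> ln (real C)" by (rule A)
  also have "real C \<le> 2 ^ (2*n)" unfolding C_def
    by (metis binomial_le_pow2 of_nat_le_iff of_nat_numeral of_nat_power)
  hence "ln (real C) \<le> ln (2 ^ (2*n))" using C0 by (intro ln_mono) auto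
  also have "ln ((2::real) ^ (2*n)) = 2 * real n * ln 2" by (simp add: ln_realpow)
  finally show ?thesis .
qed

lemma ln2_le1: "ln (2::real) \<le> 1"
  using ln_le_minus_one[of "2::real"] by simp

lemma ln2_ge_half: "ln (2::real) \<ge> 1/2"
proof -
  have "ln (1/2::real) \<le> 1/2 - 1" by (rule ln_le_minus_one) simp
  thus ?thesis by (simp add: ln_div)
qed

lemma theta_le: "theta n \<le> 6 * real n"
proof (induction n rule: less_induct)
  case (less n)
  show ?case
  proof (cases "n \<le> 1")
    case True
    hence "primes_le n = {}" by (auto simp: primes_le_def dest: prime_gt_1_nat)
    thus ?thesis by (simp add: theta_def)
  next
    case False
    define m where "m = n div 2"
    have m: "n = 2*m \<or> n = 2*m+1" unfolding m_def by presburger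
    show ?thesis
    proof (cases "n = 2*m")
      case True
      hence "m < n" using False by simp
      hence "theta m \<le> 6 * real m" by (rule less)
      have "theta (2*m) \<le> theta m + 2 * real m * ln 2" using theta_double[of m] by simp
      also have "\<dots> \<le> 6 * real m + 2 * real m * 1"
        using \<open>theta m \<le> 6 * real m\<close> ln2_le1 by (intro add_mono mult_left_mono) auto
      finally show ?thesis using True by simp
    next
      case F2: False
      hence n: "n = 2*m+1" using m by simp
      hence m1: "m \<ge> 1" using False by simp
      hence "m + 1 < n" using n by simp
      hence IH: "theta (m+1) \<le> 6 * real (m+1)" by (rule less)
      have "theta n \<le> theta (2*(m+1))" using n by (intro theta_mono) simp
      also have "\<dots> \<le> theta (m+1) + 2 * real (m+1) * ln 2" using theta_double[of "m+1"] by simp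
      also have "\<dots> \<le> 6 * real (m+1) + 2 * real (m+1) * 1"
        using IH ln2_le1 by (intro add_mono mult_left_mono) auto
      also have "\<dots> \<le> 6 * real n" using n m1 by simp
      finally show ?thesis .
    qed
  qed
qed

lemma E_telescope:
  assumes "n \<ge> 2"
  shows "(\<Sum>k\<in>{2..n}. ln (real k) / (real k * (real k - 1)))
           \<le> 1/2 + 2 * ((ln 2 + 1) / 2) - 2 * ((ln (real n) + 1) / real n)"
  using assms
proof (induction n rule: dec_induct)
  case base
  then show ?case using ln2_le1 by simp
next
  case (step n)
  have n2: "real n \<ge> 2" using step by simp
  have "{2..Suc n} = insert (Suc n) {2..n}" using step by auto
  hence S: "(\<Sum>k\<in>{2..Suc n}. ln (real k) / (real k * (real k - 1)))
     = ln (real n + 1) / ((real n + 1) * real n) + (\<Sum>k\<in>{2..n}. ln (real k) / (real k * (real k - 1)))"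
    by (simp add: add.commute)
  have T: "ln (real n + 1) / ((real n + 1) * real n)
      \<le> 2 * ((ln (real n) + 1) / real n) - 2 * ((ln (real n + 1) + 1) / (real n + 1))"
  proof -
    have d: "ln (real n + 1) - ln (real n) \<le> 1 / real n"
    proof -
      have "ln (real n + 1) - ln (real n) = ln ((real n + 1) / real n)" using n2 by (simp add: ln_div)
      also have "\<dots> \<le> (real n + 1) / real n - 1" using n2 by (intro ln_le_minus_one) auto
      also have "\<dots> = 1 / real n" using n2 by (simp add: field_simps)
      finally show ?thesis .
    qed
    have lnn: "ln (real n) \<ge> 1/2" using ln2_ge_half ln_mono[of 2 "real n"] n2 by linarith
    have "(2 * real n + 1) * (ln (real n + 1) - ln (real n)) \<le> (2 * real n + 1) * (1 / real n)"
      using d n2 by (intro mult_left_mono) auto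
    also have "\<dots> = 2 + 1 / real n" using n2 by (simp add: field_simps)
    also have "\<dots> \<le> 2 + 1/2" using n2 by (simp add: field_simps)
    finally have key: "(2 * real n + 1) * (ln (real n + 1) - ln (real n)) - ln (real n) \<le> 2"
      using lnn by linarith
    have "2 * ((ln (real n) + 1) / real n) - 2 * ((ln (real n + 1) + 1) / (real n + 1))
        - ln (real n + 1) / ((real n + 1) * real n)
        = (2 - ((2 * real n + 1) * (ln (real n + 1) - ln (real n)) - ln (real n))) / ((real n + 1) * real n)"
      using n2 by (simp add: divide_simps) (simp add: algebra_simps)
    also have "\<dots> \<ge> 0" using key n2 by (intro divide_nonneg_pos) auto
    finally show ?thesis by simp
  qed
  from S T step.IH have "(\<Sum>k\<in>{2..Suc n}. ln (real k) / (real k * (real k - 1)))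
     \<le> 1/2 + 2 * ((ln 2 + 1) / 2) - 2 * ((ln (real n + 1) + 1) / (real n + 1))" by linarith
  thus ?case by (simp only: of_nat_Suc add.commute)
qed

lemma E_bound:
  "(\<Sum>p\<in>primes_le n. ln (real p) / (real p * (real p - 1))) \<le> 5/2"
proof (cases "n \<ge> 2")
  case True
  have "(\<Sum>p\<in>primes_le n. ln (real p) / (real p * (real p - 1)))
      \<le> (\<Sum>k\<in>{2..n}. ln (real k) / (real k * (real k - 1)))"
    by (intro sum_mono2) (auto simp: primes_le_def prime_ge_2_nat)
  also have "\<dots> \<le> 1/2 + 2 * ((ln 2 + 1) / 2) - 2 * ((ln (real n) + 1) / real n)"
    by (rule E_telescope[OF True])
  also have "\<dots> \<le> 1/2 + 2 * ((1 + 1) / 2) - 0"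
    using ln2_le1 True by (intro diff_mono add_mono) auto
  finally show ?thesis by simp
next
  case False
  hence "primes_le n = {}" by (auto simp: primes_le_def dest: prime_ge_2_nat)
  thus ?thesis by simp
qed

lemma real_div_lower: "real (n div p) \<ge> real n / real p - 1" if "p > 0" for n p :: nat
proof -
  have "n = p * (n div p) + n mod p" by simp
  hence "real n = real p * real (n div p) + real (n mod p)" by (metis of_nat_add of_nat_mult)
  moreover have "real (n mod p) < real p" using that by simp
  ultimately have "real n < real p * (real (n div p) + 1)" by (simp add: algebra_simps)
  thus ?thesis using that by (simp add: field_simps)
qed

lemma mert_upper: "mert n \<le> ln (real n) + 6"
proof (cases "n = 0")
  case True
  hence "primes_le n = {}" by (auto simp: primes_le_def dest: prime_gt_0_nat)
  thus ?thesis using True by (simp add: mert_def)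
next
  case False
  have "real n * mert n - theta n = (\<Sum>p\<in>primes_le n. (real n / real p - 1) * ln (real p))"
    unfolding mert_def theta_def by (simp add: sum_distrib_left sum_subtractf algebra_simps)
  also have "\<dots> \<le> (\<Sum>p\<in>primes_le n. real (multiplicity p (fact n :: nat)) * ln (real p))"
  proof (intro sum_mono mult_right_mono)
    fix p assume p: "p \<in> primes_le n"
    hence pp: "prime p" by (simp add: primes_le_def)
    show "real n / real p - 1 \<le> real (multiplicity p (fact n :: nat))"
      using real_div_lower[of p n] prime_gt_0_nat[OF pp] vp_lower[OF pp, of n] by linarith
    show "ln (real p) \<ge> 0" using prime_gt_0_nat[OF pp] by simp
  qed
  also have "\<dots> = ln (fact n :: real)" by (rule ln_fact_sum[symmetric])
  also have "\<dots> \<le> real n * ln (real n)" by (rule ln_fact_upper)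
  finally have "real n * mert n \<le> real n * ln (real n) + 6 * real n"
    using theta_le[of n] by linarith
  hence "real n * mert n \<le> real n * (ln (real n) + 6)" by (simp add: algebra_simps)
  thus ?thesis using False by simp
qed

lemma mert_lower: "mert n \<ge> ln (real n) - 4"
proof (cases "n = 0")
  case True
  hence "primes_le n = {}" by (auto simp: primes_le_def dest: prime_gt_0_nat)
  thus ?thesis using True by (simp add: mert_def)
next
  case False
  have "real n * ln (real n) - real n \<le> ln (fact n :: real)" by (rule ln_fact_lower)
  also have "\<dots> = (\<Sum>p\<in>primes_le n. real (multiplicity p (fact n :: nat)) * ln (real p))"
    by (rule ln_fact_sum)
  also have "\<dots> \<le> (\<Sum>p\<in>primes_le n. real n / (real p - 1) * ln (real p))"
  proof (intro sum_mono mult_right_mono)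
    fix p assume p: "p \<in> primes_le n"
    hence pp: "prime p" by (simp add: primes_le_def)
    show "real (multiplicity p (fact n :: nat)) \<le> real n / (real p - 1)" by (rule vp_upper[OF pp])
    show "ln (real p) \<ge> 0" using prime_gt_0_nat[OF pp] by simp
  qed
  also have "\<dots> = real n * (mert n + (\<Sum>p\<in>primes_le n. ln (real p) / (real p * (real p - 1))))"
  proof -
    have "\<And>p. p \<in> primes_le n \<Longrightarrow> real n / (real p - 1) * ln (real p)
        = real n * (ln (real p) / real p + ln (real p) / (real p * (real p - 1)))"
    proof -
      fix p assume "p \<in> primes_le n"
      hence "real p \<ge> 2" by (auto simp: primes_le_def dest: prime_ge_2_nat)
      thus "real n / (real p - 1) * ln (real p)
        = real n * (ln (real p) / real p + ln (real p) / (real p * (real p - 1)))"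
        by (simp add: field_simps)
    qed
    hence "(\<Sum>p\<in>primes_le n. real n / (real p - 1) * ln (real p))
        = (\<Sum>p\<in>primes_le n. real n * (ln (real p) / real p + ln (real p) / (real p * (real p - 1))))"
      by (rule sum.cong[OF refl])
    also have "\<dots> = real n * (\<Sum>p\<in>primes_le n. ln (real p) / real p + ln (real p) / (real p * (real p - 1)))"
      by (rule sum_distrib_left[symmetric])
    finally show ?thesis by (simp add: mert_def sum.distrib)
  qed
  also have "\<dots> \<le> real n * (mert n + 5/2)"
    using E_bound[of n] by (intro mult_left_mono) auto
  finally have "real n * (ln (real n) - 1) \<le> real n * (mert n + 5/2)" by (simp add: algebra_simps)
  hence "ln (real n) - 1 \<le> mert n + 5/2" using False by simp
  thus ?thesis by simp
qed

lemma mert_bound: "\<bar>mert n - ln (real n)\<bar> \<le> 6"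
  using mert_upper[of n] mert_lower[of n] by linarith

lemma abel_identity:
  fixes R g :: "nat \<Rightarrow> real"
  assumes "a \<le> b"
  shows "(\<Sum>n\<in>{a<..b}. (R n - R (n - 1)) * g n)
       = R b * g (b + 1) - R a * g (a + 1) + (\<Sum>n\<in>{a<..b}. R n * (g n - g (n + 1)))"
  using assms
proof (induction b rule: dec_induct)
  case base then show ?case by simp
next
  case (step b)
  have "{a<..Suc b} = insert (Suc b) {a<..b}" using step by auto
  hence e: "\<And>f. (\<Sum>n\<in>{a<..Suc b}. f n) = f (Suc b) + (\<Sum>n\<in>{a<..b}. f n)" by simp
  show ?case unfolding e using step.IH by (simp add: algebra_simps)
qed

lemma telescope_g:
  fixes g :: "nat \<Rightarrow> real"
  assumes "a \<le> b"
  shows "(\<Sum>n\<in>{a<..b}. g n - g (n + 1)) = g (a + 1) - g (b + 1)"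
  using assms
proof (induction b rule: dec_induct)
  case base then show ?case by simp
next
  case (step b)
  have "{a<..Suc b} = insert (Suc b) {a<..b}" using step by auto
  thus ?case using step.IH by simp
qed

lemma telescope_g':
  fixes g :: "nat \<Rightarrow> real"
  assumes "a \<le> b"
  shows "(\<Sum>n\<in>{a<..b}. g (n - 1) - g n) = g a - g b"
  using assms
proof (induction b rule: dec_induct)
  case base then show ?case by simp
next
  case (step b)
  have "{a<..Suc b} = insert (Suc b) {a<..b}" using step by auto
  thus ?case using step.IH by simp
qed

lemma abel_error:
  fixes c g :: "nat \<Rightarrow> real" and K :: real
  assumes R: "\<And>n. \<bar>(\<Sum>k\<in>{1..n}. c k) - ln (real n)\<bar> \<le> K"
  assumes mono: "\<And>m n. a < m \<Longrightarrow> m \<le> n \<Longrightarrow> g n \<le> g m"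
  assumes nonneg: "\<And>n. a < n \<Longrightarrow> g n \<ge> 0"
  assumes ab: "a \<le> b"
  shows "\<bar>(\<Sum>n\<in>{a<..b}. c n * g n) - (\<Sum>n\<in>{a<..b}. (ln (real n) - ln (real (n - 1))) * g n)\<bar>
          \<le> 2 * K * g (a + 1)"
proof -
  define R where "R n = (\<Sum>k\<in>{1..n}. c k) - ln (real n)" for n
  have cR: "c n = (R n - R (n - 1)) + (ln (real n) - ln (real (n - 1)))" if "n > 0" for n
  proof -
    have "{1..n} = insert n {1..n - 1}" using that by auto
    moreover have "n \<notin> {1..n-1}" by auto
    ultimately have "(\<Sum>k\<in>{1..n}. c k) = c n + (\<Sum>k\<in>{1..n-1}. c k)" by simp
    thus ?thesis unfolding R_def by simp
  qed
  have "(\<Sum>n\<in>{a<..b}. c n * g n) - (\<Sum>n\<in>{a<..b}. (ln (real n) - ln (real (n - 1))) * g n)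
      = (\<Sum>n\<in>{a<..b}. (R n - R (n - 1)) * g n)"
    by (subst sum_subtractf[symmetric]) (intro sum.cong refl, auto simp: cR algebra_simps)
  also have "\<dots> = R b * g (b + 1) - R a * g (a + 1) + (\<Sum>n\<in>{a<..b}. R n * (g n - g (n + 1)))"
    by (rule abel_identity[OF ab])
  finally have eq: "(\<Sum>n\<in>{a<..b}. c n * g n) - (\<Sum>n\<in>{a<..b}. (ln (real n) - ln (real (n - 1))) * g n)
      = R b * g (b + 1) - R a * g (a + 1) + (\<Sum>n\<in>{a<..b}. R n * (g n - g (n + 1)))" .
  have RK: "\<bar>R n\<bar> \<le> K" for n using R[of n] unfolding R_def .
  have g1: "0 \<le> g (b+1)" "g (b+1) \<le> g (a+1)" "0 \<le> g (a+1)" using ab by (auto intro: nonneg mono)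
  have "\<bar>\<Sum>n\<in>{a<..b}. R n * (g n - g (n + 1))\<bar> \<le> (\<Sum>n\<in>{a<..b}. \<bar>R n * (g n - g (n + 1))\<bar>)"
    by (rule sum_abs)
  also have "\<dots> \<le> (\<Sum>n\<in>{a<..b}. K * (g n - g (n + 1)))"
  proof (intro sum_mono)
    fix n assume n: "n \<in> {a<..b}"
    have "g (n+1) \<le> g n" using n by (intro mono) auto
    hence "\<bar>R n * (g n - g (n + 1))\<bar> = \<bar>R n\<bar> * (g n - g (n + 1))" by (simp add: abs_mult)
    also have "\<dots> \<le> K * (g n - g (n + 1))" using RK[of n] \<open>g (n+1) \<le> g n\<close> by (intro mult_right_mono) auto
    finally show "\<bar>R n * (g n - g (n + 1))\<bar> \<le> K * (g n - g (n + 1))" .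
  qed
  also have "\<dots> = K * (g (a + 1) - g (b + 1))"
    using telescope_g[OF ab, of g] by (simp add: sum_distrib_left[symmetric])
  finally have E: "\<bar>\<Sum>n\<in>{a<..b}. R n * (g n - g (n + 1))\<bar> \<le> K * (g (a + 1) - g (b + 1))" .
  have "\<bar>R b * g (b + 1)\<bar> \<le> K * g (b+1)" using RK[of b] g1 by (simp add: abs_mult mult_right_mono)
  moreover have "\<bar>R a * g (a + 1)\<bar> \<le> K * g (a+1)" using RK[of a] g1 by (simp add: abs_mult mult_right_mono)
  ultimately show ?thesis unfolding eq using E by (simp add: algebra_simps)
qed

definition cpr :: "nat \<Rightarrow> real" where
  "cpr k = (if prime k then ln (real k) / real k else 0)"

lemma cpr_sum: "(\<Sum>k\<in>{1..n}. cpr k) = mert n"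
proof -
  have "(\<Sum>k\<in>{1..n}. cpr k) = (\<Sum>k\<in>{k\<in>{1..n}. prime k}. ln (real k) / real k)"
    unfolding cpr_def by (subst sum.inter_filter) auto
  also have "{k\<in>{1..n}. prime k} = primes_le n"
    by (auto simp: primes_le_def dest: prime_gt_0_nat)
  finally show ?thesis by (simp add: mert_def)
qed

lemma cpr_bound: "\<bar>(\<Sum>k\<in>{1..n}. cpr k) - ln (real n)\<bar> \<le> 6"
  by (subst cpr_sum) (rule mert_bound)

definition pset :: "nat \<Rightarrow> nat \<Rightarrow> nat set" where
  "pset a b = {p. prime p \<and> a < p \<and> p \<le> b}"

lemma finite_pset [simp]: "finite (pset a b)"
  unfolding pset_def by (rule finite_subset[of _ "{..b}"]) auto

lemma pset_sum:
  assumes "\<And>n. \<not> prime n \<Longrightarrow> f n = 0"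
  shows "(\<Sum>n\<in>{a<..b}. f n) = (\<Sum>p\<in>pset a b. f p)"
proof -
  have "(\<Sum>n\<in>{a<..b}. f n) = (\<Sum>n\<in>{a<..b}. if prime n then f n else 0)"
    using assms by (intro sum.cong) auto
  also have "\<dots> = (\<Sum>n\<in>{n\<in>{a<..b}. prime n}. f n)" by (subst sum.inter_filter) auto
  also have "{n\<in>{a<..b}. prime n} = pset a b" by (auto simp: pset_def)
  finally show ?thesis .
qed

lemma ln_step_le: "n \<ge> 2 \<Longrightarrow> ln (real n) - ln (real (n - 1)) \<le> 1 / real (n - 1)"
proof -
  assume n: "n \<ge> 2"
  have r: "real (n - 1) = real n - 1" using n by simp
  have "ln (real n) - ln (real (n - 1)) = ln (real n / real (n - 1))" using n by (simp add: ln_div)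
  also have "\<dots> \<le> real n / real (n - 1) - 1" using n by (intro ln_le_minus_one) auto
  also have "\<dots> = 1 / real (n - 1)" using n unfolding r by (simp add: field_simps)
  finally show ?thesis .
qed

lemma ln_step_nonneg: "n \<ge> 2 \<Longrightarrow> ln (real n) - ln (real (n - 1)) \<ge> 0"
  by simp

lemma prime_sum_1:
  assumes a: "a \<ge> 2" and ab: "a \<le> b"
  shows "(\<Sum>p\<in>pset a b. 1 / (real p * ln (real p)))
           \<le> 1 / ln (real a) - 1 / ln (real b) + 12 / (ln (real a + 1))^2"
    and "(\<Sum>p\<in>pset a b. 1 / (real p * ln (real p)))
           \<ge> (1 - 1 / real a) * (1 / ln (real a) - 1 / ln (real b)) - 12 / (ln (real a + 1))^2"
proof -
  define g where "g n = 1 / (ln (real n))^2" for n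
  have ab': "\<bar>(\<Sum>n\<in>{a<..b}. cpr n * g n) - (\<Sum>n\<in>{a<..b}. (ln (real n) - ln (real (n - 1))) * g n)\<bar>
          \<le> 2 * 6 * g (a + 1)"
  proof (rule abel_error[OF cpr_bound _ _ ab])
    fix m n assume "a < m" "m \<le> n"
    hence "ln (real m) \<le> ln (real n)" "ln (real m) > 0" using a by auto
    thus "g n \<le> g m" unfolding g_def by (intro divide_left_mono power_mono mult_pos_pos) auto
  qed (auto simp: g_def)
  have L: "(\<Sum>n\<in>{a<..b}. cpr n * g n) = (\<Sum>p\<in>pset a b. 1 / (real p * ln (real p)))"
  proof -
    have "(\<Sum>n\<in>{a<..b}. cpr n * g n) = (\<Sum>p\<in>pset a b. cpr p * g p)"
      by (rule pset_sum) (simp add: cpr_def)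
    also have "\<dots> = (\<Sum>p\<in>pset a b. 1 / (real p * ln (real p)))"
    proof (intro sum.cong refl)
      fix p assume "p \<in> pset a b"
      hence "prime p" "p > 1" by (auto simp: pset_def dest: prime_gt_1_nat)
      thus "cpr p * g p = 1 / (real p * ln (real p))"
        by (simp add: cpr_def g_def power2_eq_square field_simps)
    qed
    finally show ?thesis .
  qed
  have g1: "2 * 6 * g (a + 1) = 12 / (ln (real a + 1))^2" by (simp add: g_def add.commute)
  have tm1: "(ln (real n) - ln (real (n - 1))) * g n \<le> 1 / ln (real (n - 1)) - 1 / ln (real n)"
    and tm2: "(ln (real n) - ln (real (n - 1))) * g n \<ge> (1 - 1 / real a) * (1 / ln (real (n - 1)) - 1 / ln (real n))"
    if n: "n \<in> {a<..b}" for n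
  proof -
    define u where "u = ln (real (n - 1))"
    define w where "w = ln (real n)"
    have n3: "n \<ge> 3" "real (n - 1) \<ge> 2" using n a by auto
    have u0: "u > 0" unfolding u_def using n3 by simp
    have uw: "u \<le> w" unfolding u_def w_def using n3 by simp
    have w1: "w \<ge> 1"
    proof -
      have "exp 1 \<le> (3::real)" using exp_le by simp
      also have "3 \<le> real n" using n3 by simp
      finally have "ln (exp 1) \<le> ln (real n)" using n3 by (subst ln_le_cancel_iff) auto
      thus ?thesis unfolding w_def by simp
    qed
    have eq1: "1 / u - 1 / w = (w - u) / (u * w)" using u0 uw by (simp add: field_simps)
    show "(ln (real n) - ln (real (n - 1))) * g n \<le> 1 / ln (real (n - 1)) - 1 / ln (real n)"
    proof -
      have "(w - u) / (w*w) \<le> (w - u)/(u*w)"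
        using u0 uw by (intro divide_left_mono mult_right_mono mult_pos_pos) auto
      thus ?thesis unfolding g_def u_def[symmetric] w_def[symmetric] eq1
        by (simp add: power2_eq_square)
    qed
    have wu: "w - u \<le> 1 / real a"
    proof -
      have "w - u \<le> 1 / real (n - 1)" unfolding u_def w_def using ln_step_le[of n] n3 by simp
      also have "\<dots> \<le> 1 / real a" using n a by (intro divide_left_mono mult_pos_pos) auto
      finally show ?thesis .
    qed
    have "u / w \<ge> 1 - 1 / real a"
    proof -
      have "(w - u) / w \<le> w - u" using w1 uw by (simp add: divide_le_eq mult_le_cancel_left1)
      hence "1 - u / w \<le> 1 / real a" using wu w1 by (simp add: diff_divide_distrib)
      thus ?thesis by simp
    qed
    moreover have "1 / u - 1 / w \<ge> 0" using u0 uw by (simp add: frac_le)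
    ultimately have "(1 - 1 / real a) * (1 / u - 1 / w) \<le> (u / w) * (1 / u - 1 / w)"
      by (intro mult_right_mono) auto
    also have "(u / w) * (1 / u - 1 / w) = (w - u) * (1 / w^2)" using u0 uw
      by (simp add: field_simps power2_eq_square)
    finally show "(ln (real n) - ln (real (n - 1))) * g n \<ge> (1 - 1 / real a) * (1 / ln (real (n - 1)) - 1 / ln (real n))"
      unfolding g_def u_def[symmetric] w_def[symmetric] by simp
  qed
  have tel: "(\<Sum>n\<in>{a<..b}. 1 / ln (real (n - 1)) - 1 / ln (real n)) = 1 / ln (real a) - 1 / ln (real b)"
    using telescope_g'[OF ab, of "\<lambda>n. 1 / ln (real n)"] by simp
  have M1: "(\<Sum>n\<in>{a<..b}. (ln (real n) - ln (real (n - 1))) * g n) \<le> 1 / ln (real a) - 1 / ln (real b)"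
    unfolding tel[symmetric] by (intro sum_mono tm1)
  have M2: "(\<Sum>n\<in>{a<..b}. (ln (real n) - ln (real (n - 1))) * g n) \<ge> (1 - 1 / real a) * (1 / ln (real a) - 1 / ln (real b))"
    unfolding tel[symmetric] sum_distrib_left by (intro sum_mono tm2)
  show "(\<Sum>p\<in>pset a b. 1 / (real p * ln (real p)))
           \<le> 1 / ln (real a) - 1 / ln (real b) + 12 / (ln (real a + 1))^2"
    using ab' M1 unfolding L g1 by linarith
  show "(\<Sum>p\<in>pset a b. 1 / (real p * ln (real p)))
           \<ge> (1 - 1 / real a) * (1 / ln (real a) - 1 / ln (real b)) - 12 / (ln (real a + 1))^2"
    using ab' M2 unfolding L g1 by linarith
qed

lemma prime_sum_2:
  assumes a: "a \<ge> 2" and ab: "a \<le> b"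
  shows "(\<Sum>p\<in>pset a b. 1 / real p)
           \<le> ln (ln (real b)) - ln (ln (real a)) + 12 / ln (real a + 1)"
proof -
  define g where "g n = 1 / ln (real n)" for n
  have ab': "\<bar>(\<Sum>n\<in>{a<..b}. cpr n * g n) - (\<Sum>n\<in>{a<..b}. (ln (real n) - ln (real (n - 1))) * g n)\<bar>
          \<le> 2 * 6 * g (a + 1)"
  proof (rule abel_error[OF cpr_bound _ _ ab])
    fix m n assume "a < m" "m \<le> n"
    hence "ln (real m) \<le> ln (real n)" "ln (real m) > 0" using a by auto
    thus "g n \<le> g m" unfolding g_def by (intro divide_left_mono mult_pos_pos) auto
  qed (auto simp: g_def)
  have L: "(\<Sum>n\<in>{a<..b}. cpr n * g n) = (\<Sum>p\<in>pset a b. 1 / real p)"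
  proof -
    have "(\<Sum>n\<in>{a<..b}. cpr n * g n) = (\<Sum>p\<in>pset a b. cpr p * g p)"
      by (rule pset_sum) (simp add: cpr_def)
    also have "\<dots> = (\<Sum>p\<in>pset a b. 1 / real p)"
    proof (intro sum.cong refl)
      fix p assume "p \<in> pset a b"
      hence "prime p" "p > 1" by (auto simp: pset_def dest: prime_gt_1_nat)
      thus "cpr p * g p = 1 / real p" by (simp add: cpr_def g_def field_simps)
    qed
    finally show ?thesis .
  qed
  have g1: "2 * 6 * g (a + 1) = 12 / ln (real a + 1)" by (simp add: g_def add.commute)
  have tm1: "(ln (real n) - ln (real (n - 1))) * g n \<le> ln (ln (real n)) - ln (ln (real (n - 1)))"
    if n: "n \<in> {a<..b}" for n
  proof -
    define u where "u = ln (real (n - 1))"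
    define w where "w = ln (real n)"
    have n3: "n \<ge> 3" "real (n - 1) \<ge> 2" using n a by auto
    have u0: "u > 0" unfolding u_def using n3 by simp
    have uw: "u \<le> w" unfolding u_def w_def using n3 by simp
    have "ln (u / w) \<le> u / w - 1" using u0 uw by (intro ln_le_minus_one) auto
    hence "ln w - ln u \<ge> 1 - u / w" using u0 uw by (simp add: ln_div)
    moreover have "1 - u / w = (w - u) * (1 / w)" using u0 uw by (simp add: field_simps)
    ultimately show ?thesis unfolding g_def u_def[symmetric] w_def[symmetric] by simp
  qed
  have tel: "(\<Sum>n\<in>{a<..b}. ln (ln (real n)) - ln (ln (real (n - 1)))) = ln (ln (real b)) - ln (ln (real a))"
    using telescope_g'[OF ab, of "\<lambda>n. - ln (ln (real n))"] by simp
  have M1: "(\<Sum>n\<in>{a<..b}. (ln (real n) - ln (real (n - 1))) * g n) \<le> ln (ln (real b)) - ln (ln (real a))"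
    unfolding tel[symmetric] by (intro sum_mono tm1)
  show ?thesis using ab' M1 unfolding L g1 by linarith
qed

definition mf :: "(nat \<Rightarrow> real) \<Rightarrow> nat \<Rightarrow> real" where
  "mf h n = (if n = 0 then 0 else \<Prod>p\<in>prime_factors n. (if multiplicity p n = 1 then h p else 0))"

lemma prod_primes_mult:
  fixes A :: "nat set"
  assumes "finite A" "\<forall>p\<in>A. prime p" "prime q"
  shows "multiplicity q (\<Prod>A) = (if q \<in> A then 1 else 0)"
  using multiplicity_prod_prime_powers[of A q "\<lambda>_. 1"] assms by simp

lemma prod_primes_pos: "finite (A::nat set) \<Longrightarrow> \<forall>p\<in>A. prime p \<Longrightarrow> \<Prod>A > (0::nat)"
  by (metis prime_gt_0_nat prod_pos)

lemma prod_primes_pf: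
  fixes A :: "nat set"
  assumes "finite A" "\<forall>p\<in>A. prime p"
  shows "prime_factors (\<Prod>A) = A"
proof -
  have "\<Prod>A \<noteq> (0::nat)" using prod_primes_pos[OF assms] by simp
  thus ?thesis using prod_primes_mult[OF assms] assms
    by (auto simp: prime_factors_multiplicity split: if_splits)
qed

lemma mf_prod:
  fixes A :: "nat set"
  assumes "finite A" "\<forall>p\<in>A. prime p"
  shows "mf h (\<Prod>A) = (\<Prod>p\<in>A. h p)"
  unfolding mf_def using prod_primes_pos[OF assms] prod_primes_pf[OF assms] prod_primes_mult[OF assms] assms(2)
  by (auto intro!: prod.cong)

lemma mf_nonzero:
  assumes "mf h n \<noteq> 0"
  shows "n \<noteq> 0" "n = \<Prod>(prime_factors n)" "\<forall>p\<in>prime_factors n. h p \<noteq> 0"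
proof -
  show n0: "n \<noteq> 0" using assms by (auto simp: mf_def split: if_splits)
  have P: "(\<Prod>p\<in>prime_factors n. (if multiplicity p n = 1 then h p else 0)) \<noteq> 0"
    using assms n0 by (simp add: mf_def)
  hence m1: "\<forall>p\<in>prime_factors n. multiplicity p n = 1 \<and> h p \<noteq> 0"
    by (auto simp: prod_zero_iff split: if_splits)
  thus "\<forall>p\<in>prime_factors n. h p \<noteq> 0" by auto
  have "n = (\<Prod>p\<in>prime_factors n. p ^ multiplicity p n)"
    using prime_factorization_nat[of n] n0 by simp
  also have "\<dots> = (\<Prod>p\<in>prime_factors n. p)" using m1 by (intro prod.cong) auto
  finally show "n = \<Prod>(prime_factors n)" by simp
qed

lemma mf_support:
  fixes S :: "nat set"
  assumes "\<And>p. h p \<noteq> 0 \<Longrightarrow> p \<in> S"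
  assumes "mf h n \<noteq> 0"
  shows "n \<in> Prod ` Pow S"
proof -
  have "prime_factors n \<subseteq> S" using mf_nonzero(3)[OF assms(2)] assms(1) by auto
  moreover have "n = \<Prod>(prime_factors n)" using mf_nonzero(2)[OF assms(2)] .
  ultimately show ?thesis by auto
qed

lemma prod_inj:
  fixes S :: "nat set"
  assumes "finite S" "\<forall>p\<in>S. prime p"
  shows "inj_on Prod (Pow S)"
proof (rule inj_onI)
  fix A B assume A: "A \<in> Pow S" and B: "B \<in> Pow S" and eq: "\<Prod>A = (\<Prod>B :: nat)"
  have fA: "finite A" "\<forall>p\<in>A. prime p" using A assms finite_subset by auto
  have fB: "finite B" "\<forall>p\<in>B. prime p" using B assms finite_subset by auto
  have "A = prime_factors (\<Prod>A)" using prod_primes_pf[OF fA] by (rule sym)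
  also have "\<dots> = prime_factors (\<Prod>B)" by (simp only: eq)
  also have "\<dots> = B" using prod_primes_pf[OF fB] .
  finally show "A = B" .
qed

lemma sum_support:
  fixes W :: "nat \<Rightarrow> real" and S :: "nat set"
  assumes S: "finite S" "\<forall>p\<in>S. prime p"
  assumes W: "\<And>m. W m \<noteq> 0 \<Longrightarrow> m \<in> Prod ` Pow S"
  shows "(\<Sum>m\<in>{1..N}. W m) = (\<Sum>A\<in>{A\<in>Pow S. \<Prod>A \<le> N}. W (\<Prod>A))"
proof -
  have pos: "\<Prod>A \<ge> (1::nat)" if "A \<in> Pow S" for A
  proof -
    have "finite A" using that S(1) by (auto intro: finite_subset)
    moreover have "\<forall>p\<in>A. prime p" using that S(2) by auto
    ultimately have "\<Prod>A > (0::nat)" by (rule prod_primes_pos)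
    thus ?thesis by simp
  qed
  have "(\<Sum>m\<in>{1..N}. W m) = (\<Sum>m\<in>Prod ` {A\<in>Pow S. \<Prod>A \<le> N}. W m)"
  proof (rule sum.mono_neutral_right)
    show "Prod ` {A \<in> Pow S. \<Prod>A \<le> N} \<subseteq> {1..N}" using pos by auto
    show "\<forall>i\<in>{1..N} - Prod ` {A \<in> Pow S. \<Prod>A \<le> N}. W i = 0"
    proof
      fix i assume i: "i \<in> {1..N} - Prod ` {A \<in> Pow S. \<Prod>A \<le> N}"
      show "W i = 0"
      proof (rule ccontr)
        assume "W i \<noteq> 0"
        then obtain A where "A \<in> Pow S" "i = \<Prod>A" using W by blast
        thus False using i by auto
      qed
    qed
  qed auto
  also have "\<dots> = (\<Sum>A\<in>{A\<in>Pow S. \<Prod>A \<le> N}. W (\<Prod>A))"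
    by (rule sum.reindex_cong[OF inj_on_subset[OF prod_inj[OF S]]]) auto
  finally show ?thesis .
qed

lemma infsum_support:
  fixes W :: "nat \<Rightarrow> real" and S :: "nat set"
  assumes S: "finite S" "\<forall>p\<in>S. prime p"
  assumes W: "\<And>m. W m \<noteq> 0 \<Longrightarrow> m \<in> Prod ` Pow S"
  shows "infsum W {d. d \<ge> 1 \<and> P d} = (\<Sum>A\<in>{A\<in>Pow S. P (\<Prod>A)}. W (\<Prod>A))"
proof -
  have pos: "\<Prod>A \<ge> (1::nat)" if "A \<in> Pow S" for A
  proof -
    have "finite A" using that S(1) by (auto intro: finite_subset)
    moreover have "\<forall>p\<in>A. prime p" using that S(2) by auto
    ultimately have "\<Prod>A > (0::nat)" by (rule prod_primes_pos)
    thus ?thesis by simp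
  qed
  have fin: "finite (Prod ` {A\<in>Pow S. P (\<Prod>A)})" using S by auto
  have "infsum W {d. d \<ge> 1 \<and> P d} = infsum W (Prod ` {A\<in>Pow S. P (\<Prod>A)})"
  proof (rule infsum_cong_neutral)
    fix d assume "d \<in> {d. d \<ge> 1 \<and> P d} - Prod ` {A\<in>Pow S. P (\<Prod>A)}"
    show "W d = 0"
    proof (rule ccontr)
      assume "W d \<noteq> 0"
      then obtain A where "A \<in> Pow S" "d = \<Prod>A" using W by blast
      thus False using \<open>d \<in> _\<close> by auto
    qed
  qed (use pos in auto)
  also have "\<dots> = (\<Sum>m\<in>Prod ` {A\<in>Pow S. P (\<Prod>A)}. W m)" using fin by simp
  also have "\<dots> = (\<Sum>A\<in>{A\<in>Pow S. P (\<Prod>A)}. W (\<Prod>A))"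
    by (rule sum.reindex_cong[OF inj_on_subset[OF prod_inj[OF S]]]) auto
  finally show ?thesis .
qed

lemma pow_sum_prod:
  fixes g :: "nat \<Rightarrow> real"
  assumes "finite S"
  shows "(\<Sum>A\<in>Pow S. \<Prod>p\<in>A. g p) = (\<Prod>p\<in>S. 1 + g p)"
  using prod_add[OF assms, of g "\<lambda>_. 1"] by (simp add: add.commute)

lemma coprime_prod_primes:
  fixes C D :: "nat set"
  assumes "finite C" "\<forall>p\<in>C. prime p" "finite D" "\<forall>p\<in>D. prime p"
  shows "coprime (\<Prod>C) (\<Prod>D) \<longleftrightarrow> C \<inter> D = {}"
proof
  assume cop: "coprime (\<Prod>C) (\<Prod>D)"
  show "C \<inter> D = {}"
  proof (rule ccontr)
    assume "C \<inter> D \<noteq> {}"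
    then obtain p where p: "p \<in> C" "p \<in> D" by auto
    have "p dvd \<Prod>C" using p(1) assms(1) by (intro dvd_prodI)
    moreover have "p dvd \<Prod>D" using p(2) assms(3) by (intro dvd_prodI)
    ultimately have "is_unit p" using cop by (metis coprime_common_divisor)
    moreover have "prime p" using p assms by auto
    ultimately show False by (simp add: not_prime_unit)
  qed
next
  assume disj: "C \<inter> D = {}"
  show "coprime (\<Prod>C) (\<Prod>D)"
  proof (intro prod_coprime_left prod_coprime_right)
    fix p q assume "p \<in> C" "q \<in> D"
    thus "coprime p q" using disj assms by (intro primes_coprime) auto
  qed
qed

definition Sx :: "real \<Rightarrow> nat set" where
  "Sx x = {p. prime p \<and> lam x ^ 2 \<le> real p \<and> real p \<le> exp ((ln (lam x))^2)}"

lemma finite_Sx [simp]: "finite (Sx x)"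
proof (rule finite_subset[of _ "{..nat \<lceil>exp ((ln (lam x))^2)\<rceil>}"])
  show "Sx x \<subseteq> {..nat \<lceil>exp ((ln (lam x))^2)\<rceil>}"
    unfolding Sx_def by (auto simp: le_nat_iff le_ceiling_iff)
qed simp

lemma Sx_prime: "p \<in> Sx x \<Longrightarrow> prime p"
  by (simp add: Sx_def)

lemma Sx_primes: "\<forall>p\<in>Sx x. prime p"
  by (simp add: Sx_def)

lemma r_prime_supp: "r_prime x p \<noteq> 0 \<Longrightarrow> p \<in> Sx x"
  by (auto simp: r_prime_def Sx_def split: if_splits)

lemma r_prime_nonneg: "lam x \<ge> 0 \<Longrightarrow> r_prime x p \<ge> 0"
  by (auto simp: r_prime_def dest: prime_gt_0_nat intro!: divide_nonneg_nonneg mult_nonneg_nonneg)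

lemma r_mf: "r x n = mf (r_prime x) n"
  unfolding r_def mf_def r_pp_def by simp

definition tp :: "real \<Rightarrow> nat \<Rightarrow> real" where
  "tp x p = r_prime x p / (1 + (r_prime x p)^2)"

lemma tp_supp: "tp x p \<noteq> 0 \<Longrightarrow> p \<in> Sx x"
  by (auto simp: tp_def intro: r_prime_supp)

lemma tp_nonneg: "lam x \<ge> 0 \<Longrightarrow> tp x p \<ge> 0"
  using r_prime_nonneg[of x p] by (auto simp: tp_def intro!: divide_nonneg_pos add_pos_nonneg)

lemma tp_le: "lam x \<ge> 0 \<Longrightarrow> tp x p \<le> r_prime x p"
proof -
  assume "lam x \<ge> 0"
  have "r_prime x p / (1 + (r_prime x p)^2) \<le> r_prime x p / 1"
  proof (rule divide_left_mono)
    have "0 < 1 + (r_prime x p)^2" by (metis add_pos_nonneg zero_less_one zero_le_power2)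
    thus "0 < (1 + (r_prime x p)^2) * 1" by simp
  qed (use r_prime_nonneg[OF \<open>lam x \<ge> 0\<close>, of p] in auto)
  thus ?thesis by (simp add: tp_def)
qed

lemma r_prime_power:
  assumes "prime p" "k \<ge> 1"
  shows "r x (p ^ k) = (if k = 1 then r_prime x p else 0)"
proof -
  have pf: "prime_factors (p ^ k) = {p}"
  proof (rule set_eqI)
    fix q
    show "q \<in> prime_factors (p ^ k) \<longleftrightarrow> q \<in> {p}"
    proof
      assume "q \<in> prime_factors (p ^ k)"
      hence "prime q" "q dvd p ^ k" by (auto simp: in_prime_factors_iff)
      hence "q dvd p" using prime_dvd_power by blast
      thus "q \<in> {p}" using \<open>prime q\<close> assms(1) primes_dvd_imp_eq by blast
    next
      assume "q \<in> {p}"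
      thus "q \<in> prime_factors (p ^ k)" using assms
        by (auto simp: in_prime_factors_iff dvd_power prime_gt_0_nat)
    qed
  qed
  have "p ^ k \<noteq> 0" using assms prime_gt_0_nat by simp
  thus ?thesis unfolding r_def r_pp_def pf using assms by simp
qed

lemma t_mf: "t x n = mf (tp x) n"
proof (cases "n = 0")
  case True thus ?thesis by (simp add: t_def mf_def)
next
  case False
  have "t_pp x p (multiplicity p n) = (if multiplicity p n = 1 then tp x p else 0)"
    if "p \<in> prime_factors n" for p
  proof -
    have pp: "prime p" using that by auto
    have "multiplicity p n \<ge> 1" using that False
      by (simp add: prime_factors_multiplicity)
    thus ?thesis unfolding t_pp_def using r_prime_power[OF pp] by (simp add: tp_def)
  qed
  thus ?thesis unfolding t_def mf_def using False by (auto intro!: prod.cong)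
qed

lemma t_prime: "prime p \<Longrightarrow> t x p = tp x p"
  using mf_prod[of "{p}" "tp x"] by (simp add: t_mf)

lemma sqrt_prod_nat:
  fixes A :: "nat set"
  shows "sqrt (real (\<Prod>A)) = (\<Prod>p\<in>A. sqrt (real p))"
proof (induction A rule: infinite_finite_induct)
  case (insert a A)
  then show ?case by (simp add: real_sqrt_mult)
qed simp_all

lemma powr_prod_nat:
  fixes A :: "nat set"
  shows "real (\<Prod>A) powr e = (\<Prod>p\<in>A. real p powr e)"
proof -
  have "real (\<Prod>A) = (\<Prod>p\<in>A. real p)" by simp
  thus ?thesis by (simp add: prod_powr_distrib)
qed

definition gx :: "real \<Rightarrow> nat \<Rightarrow> real" where
  "gx x p = tp x p / sqrt (real p)"

lemma gx_nonneg: "lam x \<ge> 0 \<Longrightarrow> gx x p \<ge> 0"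
  using tp_nonneg[of x p] by (simp add: gx_def)

lemma sum_t_eq:
  "(\<Sum>m\<in>{1..N}. t x m / sqrt (real m)) = (\<Sum>A\<in>{A\<in>Pow (Sx x). \<Prod>A \<le> N}. \<Prod>p\<in>A. gx x p)"
proof -
  have "(\<Sum>m\<in>{1..N}. t x m / sqrt (real m)) = (\<Sum>A\<in>{A\<in>Pow (Sx x). \<Prod>A \<le> N}. t x (\<Prod>A) / sqrt (real (\<Prod>A)))"
  proof (rule sum_support[OF finite_Sx Sx_primes])
    fix m assume "t x m / sqrt (real m) \<noteq> 0"
    hence "mf (tp x) m \<noteq> 0" by (simp add: t_mf)
    thus "m \<in> Prod ` Pow (Sx x)" using mf_support[of "tp x" "Sx x" m] tp_supp by blast
  qed
  also have "\<dots> = (\<Sum>A\<in>{A\<in>Pow (Sx x). \<Prod>A \<le> N}. \<Prod>p\<in>A. gx x p)"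
  proof (intro sum.cong refl)
    fix A assume "A \<in> {A\<in>Pow (Sx x). \<Prod>A \<le> N}"
    hence A: "finite A" "\<forall>p\<in>A. prime p" using Sx_primes[of x] finite_subset[OF _ finite_Sx] by auto
    show "t x (\<Prod>A) / sqrt (real (\<Prod>A)) = (\<Prod>p\<in>A. gx x p)"
      unfolding t_mf mf_prod[OF A] sqrt_prod_nat gx_def by (simp add: prod_dividef)
  qed
  finally show ?thesis .
qed

lemma prod_P_eq:
  "(\<Prod>p\<in>{p. prime p \<and> real p \<le> exp ((ln (lam x))^2)}. (1 + t x p / sqrt (real p)))
     = (\<Prod>p\<in>Sx x. 1 + gx x p)"
proof -
  have fin: "finite {p. prime p \<and> real p \<le> exp ((ln (lam x))^2)}"
    by (rule finite_subset[of _ "{..nat \<lceil>exp ((ln (lam x))^2)\<rceil>}"])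
       (auto simp: le_nat_iff le_ceiling_iff)
  have "(\<Prod>p\<in>{p. prime p \<and> real p \<le> exp ((ln (lam x))^2)}. (1 + t x p / sqrt (real p)))
      = (\<Prod>p\<in>{p. prime p \<and> real p \<le> exp ((ln (lam x))^2)}. 1 + gx x p)"
    by (intro prod.cong refl) (simp add: t_prime gx_def)
  also have "\<dots> = (\<Prod>p\<in>Sx x. 1 + gx x p)"
  proof (rule prod.mono_neutral_right[OF fin])
    show "Sx x \<subseteq> {p. prime p \<and> real p \<le> exp ((ln (lam x))\<^sup>2)}" by (auto simp: Sx_def)
    show "\<forall>i\<in>{p. prime p \<and> real p \<le> exp ((ln (lam x))\<^sup>2)} - Sx x. 1 + gx x i = 1"
      using tp_supp by (auto simp: gx_def)
  qed
  finally show ?thesis .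
qed

definition good :: "real \<Rightarrow> bool" where
  "good x \<longleftrightarrow> lam x > 0 \<and> ln (lam x) \<ge> 3 \<and> exp ((ln (lam x))^2) \<ge> (lam x)^2 + 2"

definition ax :: "real \<Rightarrow> nat" where "ax x = nat \<lceil>(lam x)^2\<rceil> - 1"
definition bx :: "real \<Rightarrow> nat" where "bx x = nat \<lfloor>exp ((ln (lam x))^2)\<rfloor>"

lemma good_basic:
  assumes "good x"
  shows "lam x > 0" "ln (lam x) \<ge> 3" "(lam x)^2 \<ge> 16" "exp ((ln (lam x))^2) \<ge> (lam x)^2 + 2"
proof -
  show l0: "lam x > 0" "ln (lam x) \<ge> 3" "exp ((ln (lam x))^2) \<ge> (lam x)^2 + 2"
    using assms by (auto simp: good_def)
  have "exp 3 \<le> lam x" using l0 by (simp add: ln_ge_iff)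
  moreover have "4 \<le> exp (3::real)" using exp_ge_add_one_self[of 3] by simp
  ultimately have "4 \<le> lam x" by simp
  hence "4 * 4 \<le> lam x * lam x" by (intro mult_mono) auto
  thus "(lam x)^2 \<ge> 16" by (simp add: power2_eq_square)
qed

lemma ax_bx:
  assumes "good x"
  shows "real (ax x) \<ge> (lam x)^2 - 1" "real (ax x) \<le> (lam x)^2" "ax x \<ge> 2"
        "real (bx x) \<le> exp ((ln (lam x))^2)" "real (bx x) \<ge> exp ((ln (lam x))^2) - 1"
        "ax x \<le> bx x" "real (ax x) \<ge> 15"
proof -
  note g = good_basic[OF assms]
  define L where "L = (lam x)^2"
  define Y where "Y = exp ((ln (lam x))^2)"
  have L16: "L \<ge> 16" using g by (simp add: L_def)
  have c1: "\<lceil>L\<rceil> \<ge> 1" using L16 by linarith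
  have n1: "nat \<lceil>L\<rceil> \<ge> 1" using c1 by (subst le_nat_iff) auto
  have "real (ax x) = real_of_int \<lceil>L\<rceil> - 1" unfolding ax_def L_def[symmetric]
    using c1 by (subst of_nat_diff[OF n1]) auto
  thus A1: "real (ax x) \<ge> (lam x)^2 - 1" "real (ax x) \<le> (lam x)^2"
    unfolding L_def[symmetric] by linarith+
  thus "ax x \<ge> 2" "real (ax x) \<ge> 15" using L16 unfolding L_def[symmetric] by linarith+
  have Y0: "Y \<ge> 0" unfolding Y_def by simp
  have "real (bx x) = real_of_int \<lfloor>Y\<rfloor>" unfolding bx_def Y_def[symmetric] using Y0 by simp
  thus B: "real (bx x) \<le> exp ((ln (lam x))^2)" "real (bx x) \<ge> exp ((ln (lam x))^2) - 1"
    unfolding Y_def[symmetric] by linarith+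
  have "Y \<ge> L + 2" using g by (simp add: L_def Y_def)
  hence "real (ax x) \<le> real (bx x)" using A1 B unfolding L_def[symmetric] Y_def[symmetric] by linarith
  thus "ax x \<le> bx x" by simp
qed

lemma Sx_pset:
  assumes "good x"
  shows "Sx x = pset (ax x) (bx x)"
proof -
  note g = good_basic[OF assms]
  have c1: "\<lceil>(lam x)^2\<rceil> \<ge> 1" using g by linarith
  have Y0: "exp ((ln (lam x))^2) \<ge> 0" by simp
  show ?thesis
  proof (rule set_eqI)
    fix p
    have a: "ax x < p \<longleftrightarrow> (lam x)^2 \<le> real p"
    proof -
      have "ax x < p \<longleftrightarrow> nat \<lceil>(lam x)^2\<rceil> \<le> p" unfolding ax_def using c1 by linarith
      also have "\<dots> \<longleftrightarrow> \<lceil>(lam x)^2\<rceil> \<le> int p" using c1 by linarith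
      also have "\<dots> \<longleftrightarrow> (lam x)^2 \<le> real p" by (simp add: ceiling_le_iff)
      finally show ?thesis .
    qed
    have b: "p \<le> bx x \<longleftrightarrow> real p \<le> exp ((ln (lam x))^2)"
    proof -
      have "p \<le> bx x \<longleftrightarrow> int p \<le> \<lfloor>exp ((ln (lam x))^2)\<rfloor>" unfolding bx_def using Y0 by linarith
      also have "\<dots> \<longleftrightarrow> real p \<le> exp ((ln (lam x))^2)" by (simp add: le_floor_iff)
      finally show ?thesis .
    qed
    show "p \<in> Sx x \<longleftrightarrow> p \<in> pset (ax x) (bx x)" unfolding Sx_def pset_def using a b by auto
  qed
qed

lemma PS1:
  assumes "good x"
  shows "(\<Sum>p\<in>Sx x. 1 / (real p * ln (real p)))
          \<le> 1 / ln ((lam x)^2 - 1) - 1 / (ln (lam x))^2 + 12 / (ln ((lam x)^2))^2"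
proof -
  note g = good_basic[OF assms] and ab = ax_bx[OF assms]
  have 0: "(\<Sum>p\<in>Sx x. 1 / (real p * ln (real p))) \<le>
      1 / ln (real (ax x)) - 1 / ln (real (bx x)) + 12 / (ln (real (ax x) + 1))^2"
    unfolding Sx_pset[OF assms] by (rule prime_sum_1(1)[OF ab(3) ab(6)])
  have 1: "1 / ln (real (ax x)) \<le> 1 / ln ((lam x)^2 - 1)"
    using ab g by (intro divide_left_mono ln_mono mult_pos_pos) auto
  have 2: "1 / (ln (lam x))^2 \<le> 1 / ln (real (bx x))"
  proof -
    have "ln (real (bx x)) \<le> ln (exp ((ln (lam x))^2))" using ab by (intro ln_mono) auto
    hence "ln (real (bx x)) \<le> (ln (lam x))^2" by simp
    moreover have "ln (real (bx x)) > 0" using ab by simp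
    ultimately show ?thesis by (simp add: frac_le)
  qed
  have 3: "12 / (ln (real (ax x) + 1))^2 \<le> 12 / (ln ((lam x)^2))^2"
  proof -
    have "ln ((lam x)^2) \<le> ln (real (ax x) + 1)" using ab g by (intro ln_mono) auto
    moreover have "ln ((lam x)^2) > 0" using g by simp
    ultimately show ?thesis using ab by (intro divide_left_mono power_mono mult_pos_pos) auto
  qed
  show ?thesis using 0 1 2 3 by linarith
qed

lemma PS2:
  assumes "good x"
  shows "(\<Sum>p\<in>Sx x. 1 / (real p * ln (real p)))
          \<ge> (1 - 1 / ((lam x)^2 - 1)) * (1 / ln ((lam x)^2) - 1 / ln (exp ((ln (lam x))^2) - 1))
             - 12 / (ln ((lam x)^2))^2"
proof -
  note g = good_basic[OF assms] and ab = ax_bx[OF assms]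
  define X where "X = 1 / ln (real (ax x)) - 1 / ln (real (bx x))"
  define X' where "X' = 1 / ln ((lam x)^2) - 1 / ln (exp ((ln (lam x))^2) - 1)"
  have X0: "X \<ge> 0" unfolding X_def using ab by (simp add: frac_le)
  have XX: "X' \<le> X"
  proof -
    have "1 / ln ((lam x)^2) \<le> 1 / ln (real (ax x))"
      using ab g by (intro divide_left_mono ln_mono mult_pos_pos) auto
    moreover have "1 / ln (real (bx x)) \<le> 1 / ln (exp ((ln (lam x))^2) - 1)"
    proof -
      have Y2: "exp ((ln (lam x))^2) - 1 > 1" using g by linarith
      hence "ln (exp ((ln (lam x))^2) - 1) > 0" by (rule ln_gt_zero)
      thus ?thesis using ab Y2 by (intro divide_left_mono ln_mono mult_pos_pos) auto
    qed
    ultimately show ?thesis unfolding X_def X'_def by linarith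
  qed
  have f1: "0 \<le> 1 - 1 / ((lam x)^2 - 1)" using g by simp
  have f2: "1 - 1 / ((lam x)^2 - 1) \<le> 1 - 1 / real (ax x)"
    using ab g by (simp add: frac_le)
  have "(1 - 1 / ((lam x)^2 - 1)) * X' \<le> (1 - 1 / ((lam x)^2 - 1)) * X"
    by (rule mult_left_mono[OF XX f1])
  also have "\<dots> \<le> (1 - 1 / real (ax x)) * X" using f2 X0 by (rule mult_right_mono)
  finally have m: "(1 - 1 / ((lam x)^2 - 1)) * X' \<le> (1 - 1 / real (ax x)) * X" .
  have e: "12 / (ln (real (ax x) + 1))^2 \<le> 12 / (ln ((lam x)^2))^2"
  proof -
    have "ln ((lam x)^2) \<le> ln (real (ax x) + 1)" using ab g by (intro ln_mono) auto
    moreover have "ln ((lam x)^2) > 0" using g by simp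
    ultimately show ?thesis using ab by (intro divide_left_mono power_mono mult_pos_pos) auto
  qed
  have "(1 - 1 / real (ax x)) * X - 12 / (ln (real (ax x) + 1))^2 \<le> (\<Sum>p\<in>Sx x. 1 / (real p * ln (real p)))"
    unfolding Sx_pset[OF assms] X_def by (rule prime_sum_1(2)[OF ab(3) ab(6)])
  thus ?thesis using m e unfolding X'_def by linarith
qed

lemma PS3:
  assumes "good x"
  shows "(\<Sum>p\<in>Sx x. 1 / real p)
          \<le> ln ((ln (lam x))^2) - ln (ln ((lam x)^2 - 1)) + 12 / ln ((lam x)^2)"
proof -
  note g = good_basic[OF assms] and ab = ax_bx[OF assms]
  have 0: "(\<Sum>p\<in>Sx x. 1 / real p) \<le> ln (ln (real (bx x))) - ln (ln (real (ax x))) + 12 / ln (real (ax x) + 1)"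
    unfolding Sx_pset[OF assms] by (rule prime_sum_2[OF ab(3) ab(6)])
  have 1: "ln (ln (real (bx x))) \<le> ln ((ln (lam x))^2)"
  proof -
    have "ln (real (bx x)) \<le> ln (exp ((ln (lam x))^2))" using ab by (intro ln_mono) auto
    moreover have "ln (real (bx x)) > 0" using ab by simp
    ultimately show ?thesis by (intro ln_mono) auto
  qed
  have 2: "ln (ln ((lam x)^2 - 1)) \<le> ln (ln (real (ax x)))"
  proof -
    have "ln ((lam x)^2 - 1) \<le> ln (real (ax x))" using ab g by (intro ln_mono) auto
    moreover have "ln ((lam x)^2 - 1) > 0" using g by simp
    ultimately show ?thesis using ab g by (intro ln_mono) auto
  qed
  have 3: "12 / ln (real (ax x) + 1) \<le> 12 / ln ((lam x)^2)"
  proof -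
    have "ln ((lam x)^2) \<le> ln (real (ax x) + 1)" using ab g by (intro ln_mono) auto
    moreover have "ln ((lam x)^2) > 0" using g by simp
    ultimately show ?thesis using ab by (intro divide_left_mono mult_pos_pos) auto
  qed
  show ?thesis using 0 1 2 3 by linarith
qed

lemma rankin:
  fixes S :: "nat set" and g :: "nat \<Rightarrow> real"
  assumes S: "finite S" "\<forall>p\<in>S. prime p" and g: "\<forall>p\<in>S. g p \<ge> 0" and b: "\<beta> \<ge> 0" and N: "N \<ge> 1"
  shows "(\<Sum>A\<in>Pow S. \<Prod>p\<in>A. g p) - (\<Sum>A\<in>{A\<in>Pow S. \<Prod>A \<le> N}. \<Prod>p\<in>A. g p)
           \<le> real N powr (-\<beta>) * (\<Prod>p\<in>S. 1 + g p * real p powr \<beta>)"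
proof -
  have fin: "finite (Pow S)" using S by simp
  have "(\<Sum>A\<in>Pow S. \<Prod>p\<in>A. g p) - (\<Sum>A\<in>{A\<in>Pow S. \<Prod>A \<le> N}. \<Prod>p\<in>A. g p)
      = (\<Sum>A\<in>Pow S - {A\<in>Pow S. \<Prod>A \<le> N}. \<Prod>p\<in>A. g p)"
    by (rule sum_diff[symmetric]) (use fin in auto)
  also have "\<dots> \<le> (\<Sum>A\<in>Pow S - {A\<in>Pow S. \<Prod>A \<le> N}. real N powr (-\<beta>) * (\<Prod>p\<in>A. g p * real p powr \<beta>))"
  proof (intro sum_mono)
    fix A assume A: "A \<in> Pow S - {A\<in>Pow S. \<Prod>A \<le> N}"
    hence AS: "A \<subseteq> S" and big: "\<Prod>A > N" by auto
    have G0: "(\<Prod>p\<in>A. g p) \<ge> 0" using AS g by (intro prod_nonneg) auto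
    have le: "real N \<le> real (\<Prod>A)" by (simp only: of_nat_le_iff) (rule less_imp_le[OF big])
    have "1 \<le> real (\<Prod>A) / real N" using le N by (auto simp: field_simps simp del: of_nat_prod)
    hence "1 \<le> (real (\<Prod>A) / real N) powr \<beta>" using b by (intro ge_one_powr_ge_zero) auto
    hence "(\<Prod>p\<in>A. g p) \<le> (real (\<Prod>A) / real N) powr \<beta> * (\<Prod>p\<in>A. g p)"
      using G0 by (simp add: mult_le_cancel_right1)
    also have "(real (\<Prod>A) / real N) powr \<beta> = real N powr (-\<beta>) * real (\<Prod>A) powr \<beta>"
      using N by (simp add: powr_divide powr_minus_divide)
    also have "real (\<Prod>A) powr \<beta> = (\<Prod>p\<in>A. real p powr \<beta>)" by (rule powr_prod_nat)
    finally show "(\<Prod>p\<in>A. g p) \<le> real N powr (-\<beta>) * (\<Prod>p\<in>A. g p * real p powr \<beta>)"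
      by (simp add: prod.distrib mult_ac)
  qed
  also have "\<dots> \<le> (\<Sum>A\<in>Pow S. real N powr (-\<beta>) * (\<Prod>p\<in>A. g p * real p powr \<beta>))"
    using fin g by (intro sum_mono2 mult_nonneg_nonneg prod_nonneg) auto
  also have "\<dots> = real N powr (-\<beta>) * (\<Prod>p\<in>S. 1 + g p * real p powr \<beta>)"
    by (simp add: sum_distrib_left[symmetric] pow_sum_prod[OF S(1)])
  finally show ?thesis .
qed

lemma one_plus_le_exp:
  fixes c d :: real
  assumes "0 \<le> d" "d \<le> c"
  shows "1 + c \<le> (1 + d) * exp (c - d)"
proof -
  have "d * d \<le> c * d" using assms by (intro mult_right_mono) auto
  hence "1 + c \<le> (1 + d) * (1 + (c - d))" by (simp add: algebra_simps)
  also have "\<dots> \<le> (1 + d) * exp (c - d)"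
    using assms by (intro mult_left_mono) (auto simp: exp_ge_add_one_self add.commute)
  finally show ?thesis .
qed

lemma prod_ratio_exp:
  fixes S :: "nat set" and c d :: "nat \<Rightarrow> real"
  assumes "finite S" "\<forall>p\<in>S. 0 \<le> d p \<and> d p \<le> c p"
  shows "(\<Prod>p\<in>S. 1 + c p) \<le> (\<Prod>p\<in>S. 1 + d p) * exp (\<Sum>p\<in>S. c p - d p)"
proof -
  have "(\<Prod>p\<in>S. 1 + c p) \<le> (\<Prod>p\<in>S. (1 + d p) * exp (c p - d p))"
    using assms by (intro prod_mono) (auto intro: one_plus_le_exp)
  also have "\<dots> = (\<Prod>p\<in>S. 1 + d p) * exp (\<Sum>p\<in>S. c p - d p)"
    using assms by (simp add: prod.distrib exp_sum)
  finally show ?thesis .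
qed

lemma exp_m1_le: "0 \<le> (y::real) \<Longrightarrow> exp y - 1 \<le> y * exp y"
proof -
  assume y: "0 \<le> y"
  have "1 - y \<le> exp (- y)" using exp_ge_add_one_self[of "-y"] by simp
  hence "(1 - y) * exp y \<le> exp (-y) * exp y" by (intro mult_right_mono) auto
  thus ?thesis by (simp add: exp_minus algebra_simps)
qed

lemma exp_m1_le2: "0 \<le> (y::real) \<Longrightarrow> y \<le> 1 \<Longrightarrow> exp y - 1 \<le> y + y^2"
  using exp_bound[of y] by simp

lemma pfacts:
  assumes gx: "good x" and p: "p \<in> Sx x"
  shows "real p \<ge> (lam x)^2" "real p \<ge> 2" "ln (real p) \<ge> 2 * ln (lam x)"
        "ln (real p) \<le> (ln (lam x))^2" "sqrt (real p) \<ge> lam x" "ln (real p) > 0"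
        "r_prime x p = lam x / (sqrt (real p) * ln (real p))"
        "r_prime x p / sqrt (real p) = lam x / (real p * ln (real p))"
        "(r_prime x p)^2 = (lam x)^2 / (real p * (ln (real p))^2)"
        "r_prime x p \<le> 1 / (2 * ln (lam x))"
        "r_prime x p \<ge> 0"
proof -
  note g = good_basic[OF gx]
  have pp: "prime p" "(lam x)^2 \<le> real p" "real p \<le> exp ((ln (lam x))^2)" using p by (auto simp: Sx_def)
  show p1: "real p \<ge> (lam x)^2" using pp by simp
  show p2: "real p \<ge> 2" using prime_ge_2_nat[OF pp(1)] by simp
  have "ln ((lam x)^2) \<le> ln (real p)" using p1 g by (intro ln_mono) auto
  thus p3: "ln (real p) \<ge> 2 * ln (lam x)" using g by (simp add: ln_realpow)
  have "ln (real p) \<le> ln (exp ((ln (lam x))^2))" using pp p2 by (intro ln_mono) auto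
  thus "ln (real p) \<le> (ln (lam x))^2" by simp
  have "sqrt ((lam x)^2) \<le> sqrt (real p)" using p1 by (intro real_sqrt_le_mono)
  thus p5: "sqrt (real p) \<ge> lam x" using g by simp
  show p6: "ln (real p) > 0" using p2 by simp
  show r: "r_prime x p = lam x / (sqrt (real p) * ln (real p))" using pp by (simp add: r_prime_def)
  show "r_prime x p / sqrt (real p) = lam x / (real p * ln (real p))"
    unfolding r using p2 by (simp add: field_simps)
  show "(r_prime x p)^2 = (lam x)^2 / (real p * (ln (real p))^2)"
    unfolding r using p2 by (simp add: power_divide power_mult_distrib)
  have "exp 3 \<le> lam x" using g by (simp add: ln_ge_iff)
  moreover have "4 \<le> exp (3::real)" using exp_ge_add_one_self[of 3] by simp
  ultimately have L4: "lam x \<ge> 4" by simp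
  have "lam x / (sqrt (real p) * ln (real p)) \<le> lam x / (lam x * (2 * ln (lam x)))"
    using g p3 p5 L4 p2 by (intro divide_left_mono mult_mono mult_pos_pos) auto
  thus "r_prime x p \<le> 1 / (2 * ln (lam x))" unfolding r using g by simp
  show "r_prime x p \<ge> 0" using r_prime_nonneg[of x p] g by simp
qed

definition SPB :: "real \<Rightarrow> real" where
  "SPB x = ln ((ln (lam x))^2) - ln (ln ((lam x)^2 - 1)) + 12 / ln ((lam x)^2)"

definition Pr :: "real \<Rightarrow> real" where
  "Pr x = (\<Prod>p\<in>Sx x. 1 + gx x p)"

lemma Pr_ge1: "lam x \<ge> 0 \<Longrightarrow> Pr x \<ge> 1"
  unfolding Pr_def using gx_nonneg by (intro prod_ge_1) auto

lemma sum_le_Pr: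
  assumes "lam x \<ge> 0"
  shows "(\<Sum>m\<in>{1..N}. t x m / sqrt (real m)) \<le> Pr x"
proof -
  have "(\<Sum>m\<in>{1..N}. t x m / sqrt (real m)) = (\<Sum>A\<in>{A\<in>Pow (Sx x). \<Prod>A \<le> N}. \<Prod>p\<in>A. gx x p)"
    by (rule sum_t_eq)
  also have "\<dots> \<le> (\<Sum>A\<in>Pow (Sx x). \<Prod>p\<in>A. gx x p)"
    using gx_nonneg[OF assms] by (intro sum_mono2 prod_nonneg) auto
  also have "\<dots> = Pr x" unfolding Pr_def by (rule pow_sum_prod) simp
  finally show ?thesis .
qed

lemma sum_nonneg_t:
  assumes "lam x \<ge> 0"
  shows "(\<Sum>m\<in>{1..N}. t x m / sqrt (real m)) \<ge> 0"
  unfolding sum_t_eq using gx_nonneg[OF assms] by (intro sum_nonneg prod_nonneg) auto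

lemma part1_core:
  assumes gx: "good x" and N: "N \<ge> 1"
  shows "Pr x - (\<Sum>m\<in>{1..N}. t x m / sqrt (real m))
          \<le> Pr x * exp (- (1 / (ln (lam x))^3) * ln (real N)
               + lam x * (1 / (ln (lam x))^3) * exp (1 / ln (lam x)) * SPB x)"
proof -
  note g = good_basic[OF gx]
  define S where "S = Sx x"
  define \<beta> where "\<beta> = 1 / (ln (lam x))^3"
  define ell where "ell = ln (lam x)"
  have l3: "ell \<ge> 3" using g by (simp add: ell_def)
  have b0: "\<beta> \<ge> 0" unfolding \<beta>_def using g(2) by (intro divide_nonneg_nonneg zero_le_power) auto
  have gn: "\<forall>p\<in>S. gx x p \<ge> 0" using gx_nonneg g by auto
  have "Pr x - (\<Sum>m\<in>{1..N}. t x m / sqrt (real m))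
      = (\<Sum>A\<in>Pow S. \<Prod>p\<in>A. gx x p) - (\<Sum>A\<in>{A\<in>Pow S. \<Prod>A \<le> N}. \<Prod>p\<in>A. gx x p)"
    unfolding Pr_def sum_t_eq S_def by (subst pow_sum_prod) simp_all
  also have "\<dots> \<le> real N powr (-\<beta>) * (\<Prod>p\<in>S. 1 + gx x p * real p powr \<beta>)"
    by (rule rankin) (use gn b0 N in \<open>auto simp: S_def Sx_primes\<close>)
  finally have A1: "Pr x - (\<Sum>m\<in>{1..N}. t x m / sqrt (real m)) \<le> real N powr (-\<beta>) * (\<Prod>p\<in>S. 1 + gx x p * real p powr \<beta>)" .
  have A2: "(\<Prod>p\<in>S. 1 + gx x p * real p powr \<beta>)
      \<le> (\<Prod>p\<in>S. 1 + gx x p) * exp (\<Sum>p\<in>S. gx x p * real p powr \<beta> - gx x p)"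
  proof (rule prod_ratio_exp)
    show "finite S" by (simp add: S_def)
    show "\<forall>p\<in>S. 0 \<le> gx x p \<and> gx x p \<le> gx x p * real p powr \<beta>"
    proof
      fix p assume p: "p \<in> S"
      have "real p \<ge> 2" using pfacts[OF gx] p by (auto simp: S_def)
      hence "real p powr \<beta> \<ge> 1" using b0 by (intro ge_one_powr_ge_zero) auto
      thus "0 \<le> gx x p \<and> gx x p \<le> gx x p * real p powr \<beta>"
      proof -
        have "0 \<le> gx x p" using gn p by auto
        moreover have "gx x p * 1 \<le> gx x p * real p powr \<beta>"
          using \<open>0 \<le> gx x p\<close> \<open>real p powr \<beta> \<ge> 1\<close> by (rule mult_left_mono[rotated])
        ultimately show ?thesis by simp
      qed
    qed
  qed
  have "(\<Sum>p\<in>S. gx x p * real p powr \<beta> - gx x p) \<le> (\<Sum>p\<in>S. lam x * \<beta> * exp (1 / ell) * (1 / real p))"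
  proof (intro sum_mono)
    fix p assume p: "p \<in> S"
    note pf = pfacts[OF gx p[unfolded S_def]]
    have y0: "\<beta> * ln (real p) \<ge> 0" using b0 pf by simp
    have y1: "\<beta> * ln (real p) \<le> 1 / ell"
    proof -
      have "\<beta> * ln (real p) \<le> \<beta> * ell^2" using pf b0 by (intro mult_left_mono) (auto simp: ell_def)
      also have "\<beta> * ell^2 = 1 / ell" using l3 by (simp add: \<beta>_def ell_def[symmetric] power2_eq_square power3_eq_cube)
      finally show ?thesis .
    qed
    have "real p powr \<beta> - 1 = exp (\<beta> * ln (real p)) - 1" using pf by (simp add: powr_def mult.commute)
    also have "\<dots> \<le> \<beta> * ln (real p) * exp (\<beta> * ln (real p))" by (rule exp_m1_le[OF y0])
    also have "\<dots> \<le> \<beta> * ln (real p) * exp (1 / ell)" using y0 y1 by (intro mult_left_mono) auto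
    finally have e: "real p powr \<beta> - 1 \<le> \<beta> * ln (real p) * exp (1 / ell)" .
    have e0: "real p powr \<beta> - 1 \<ge> 0" using pf b0 by (simp add: ge_one_powr_ge_zero)
    have gle: "gx x p \<le> lam x / (real p * ln (real p))"
    proof -
      have "gx x p \<le> r_prime x p / sqrt (real p)"
        unfolding gx_def using tp_le[of x p] g pf by (intro divide_right_mono) auto
      thus ?thesis using pf(8) by linarith
    qed
    have "gx x p * real p powr \<beta> - gx x p = gx x p * (real p powr \<beta> - 1)" by (simp add: algebra_simps)
    also have "\<dots> \<le> (lam x / (real p * ln (real p))) * (\<beta> * ln (real p) * exp (1 / ell))"
      using gle e e0 gn p by (intro mult_mono) auto
    also have "\<dots> = lam x * \<beta> * exp (1 / ell) * (1 / real p)" using pf by (simp add: field_simps)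
    finally show "gx x p * real p powr \<beta> - gx x p \<le> lam x * \<beta> * exp (1 / ell) * (1 / real p)" .
  qed
  also have "(\<Sum>p\<in>S. lam x * \<beta> * exp (1 / ell) * (1 / real p)) = lam x * \<beta> * exp (1 / ell) * (\<Sum>p\<in>S. 1 / real p)"
    by (simp add: sum_distrib_left)
  also have "\<dots> \<le> lam x * \<beta> * exp (1 / ell) * SPB x"
    unfolding S_def SPB_def using PS3[OF gx] g b0 by (intro mult_left_mono) auto
  finally have A3: "(\<Sum>p\<in>S. gx x p * real p powr \<beta> - gx x p) \<le> lam x * \<beta> * exp (1 / ell) * SPB x" .
  have P0: "(\<Prod>p\<in>S. 1 + gx x p) \<ge> 0" using gn by (intro prod_nonneg) auto
  have "(\<Prod>p\<in>S. 1 + gx x p * real p powr \<beta>) \<le> (\<Prod>p\<in>S. 1 + gx x p) * exp (lam x * \<beta> * exp (1 / ell) * SPB x)"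
    using A2 mult_left_mono[OF exp_le_cancel_iff[THEN iffD2, OF A3] P0] by linarith
  hence "real N powr (-\<beta>) * (\<Prod>p\<in>S. 1 + gx x p * real p powr \<beta>) \<le> real N powr (-\<beta>) * ((\<Prod>p\<in>S. 1 + gx x p) * exp (lam x * \<beta> * exp (1 / ell) * SPB x))"
    by (rule mult_left_mono) simp
  with A1 have A: "Pr x - (\<Sum>m\<in>{1..N}. t x m / sqrt (real m))
      \<le> real N powr (-\<beta>) * ((\<Prod>p\<in>S. 1 + gx x p) * exp (lam x * \<beta> * exp (1 / ell) * SPB x))"
    by linarith
  have "real N powr (-\<beta>) = exp (- \<beta> * ln (real N))" using N by (simp add: powr_def)
  hence "real N powr (-\<beta>) * ((\<Prod>p\<in>S. 1 + gx x p) * exp (lam x * \<beta> * exp (1 / ell) * SPB x))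
      = Pr x * exp (- \<beta> * ln (real N) + lam x * \<beta> * exp (1 / ell) * SPB x)"
    by (simp add: Pr_def S_def exp_add[symmetric] del: exp_add)
  with A show ?thesis by (simp add: \<beta>_def ell_def)
qed

lemma ev_good: "eventually good at_top"
proof -
  have 1: "eventually (\<lambda>x. lam x > 0) at_top" unfolding lam_def by real_asymp
  have 2: "eventually (\<lambda>x. ln (lam x) \<ge> 3) at_top" unfolding lam_def by real_asymp
  have 3: "eventually (\<lambda>x. exp ((ln (lam x))^2) \<ge> (lam x)^2 + 2) at_top" unfolding lam_def by real_asymp
  show ?thesis using eventually_conj[OF 1 eventually_conj[OF 2 3]] unfolding good_def by simp
qed

lemma B_lim: "((\<lambda>x. exp (- (1 / (ln (lam x))^3) * (3 * lam x * ln (ln (lam x)) - ln 2)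
               + lam x * (1 / (ln (lam x))^3) * exp (1 / ln (lam x)) * SPB x)) \<longlongrightarrow> 0) at_top"
  unfolding SPB_def lam_def by real_asymp

lemma part1_ratio:
  fixes z :: "real \<Rightarrow> real"
  assumes z: "\<forall>\<^sub>F x in at_top. z x > exp (3 * lam x * ln (ln (lam x)))"
  shows "((\<lambda>x. (\<Sum>m\<in>{1..nat \<lfloor>z x\<rfloor>}. t x m / sqrt (real m)) / Pr x) \<longlongrightarrow> 1) at_top"
proof -
  define B where "B x = exp (- (1 / (ln (lam x))^3) * (3 * lam x * ln (ln (lam x)) - ln 2)
               + lam x * (1 / (ln (lam x))^3) * exp (1 / ln (lam x)) * SPB x)" for x
  have ev2: "eventually (\<lambda>x. exp (3 * lam x * ln (ln (lam x))) \<ge> 2) at_top"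
    unfolding lam_def by real_asymp
  have ev: "eventually (\<lambda>x. 1 - B x \<le> (\<Sum>m\<in>{1..nat \<lfloor>z x\<rfloor>}. t x m / sqrt (real m)) / Pr x
                        \<and> (\<Sum>m\<in>{1..nat \<lfloor>z x\<rfloor>}. t x m / sqrt (real m)) / Pr x \<le> 1) at_top"
    using z ev2 ev_good
  proof eventually_elim
    case (elim x)
    note g = good_basic[OF elim(3)]
    define N where "N = nat \<lfloor>z x\<rfloor>"
    define \<beta> where "\<beta> = 1 / (ln (lam x))^3"
    have b0: "\<beta> \<ge> 0" unfolding \<beta>_def using g(2) by (intro divide_nonneg_nonneg zero_le_power) auto
    have z2: "z x \<ge> 2" using elim by linarith
    have N1: "N \<ge> 1" unfolding N_def using z2 by (simp add: le_nat_iff le_floor_iff)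
    have NR: "real N \<ge> z x - 1" unfolding N_def using z2 by linarith
    have "ln (real N) \<ge> ln (z x / 2)" using NR z2 by (intro ln_mono) auto
    hence lnN: "ln (real N) \<ge> 3 * lam x * ln (ln (lam x)) - ln 2"
    proof -
      assume a: "ln (real N) \<ge> ln (z x / 2)"
      have "ln (z x / 2) = ln (z x) - ln 2" using z2 by (simp add: ln_div)
      moreover have "ln (exp (3 * lam x * ln (ln (lam x)))) < ln (z x)"
        using elim(1) z2 by (subst ln_less_cancel_iff) auto
      hence "ln (z x) > 3 * lam x * ln (ln (lam x))" by simp
      ultimately show ?thesis using a by linarith
    qed
    have P1: "Pr x \<ge> 1" using Pr_ge1 g by simp
    have core: "Pr x - (\<Sum>m\<in>{1..N}. t x m / sqrt (real m))
          \<le> Pr x * exp (- \<beta> * ln (real N) + lam x * \<beta> * exp (1 / ln (lam x)) * SPB x)"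
      using part1_core[OF elim(3) N1] by (simp add: \<beta>_def)
    have "- \<beta> * ln (real N) \<le> - \<beta> * (3 * lam x * ln (ln (lam x)) - ln 2)"
      using lnN b0 by (simp add: mult_left_mono)
    hence "exp (- \<beta> * ln (real N) + lam x * \<beta> * exp (1 / ln (lam x)) * SPB x) \<le> B x"
      unfolding B_def \<beta>_def[symmetric] by simp
    hence "Pr x - (\<Sum>m\<in>{1..N}. t x m / sqrt (real m)) \<le> Pr x * B x"
      using core P1 by (meson mult_left_mono order_trans zero_le_one)
    hence lo: "1 - B x \<le> (\<Sum>m\<in>{1..N}. t x m / sqrt (real m)) / Pr x"
      using P1 by (simp add: field_simps)
    have hi: "(\<Sum>m\<in>{1..N}. t x m / sqrt (real m)) / Pr x \<le> 1"
      using sum_le_Pr[of x N] g P1 by simp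
    show ?case using lo hi by (simp add: N_def)
  qed
  have l1: "((\<lambda>x. 1 - B x) \<longlongrightarrow> 1) at_top"
    using tendsto_diff[OF tendsto_const[of 1] B_lim] unfolding B_def by simp
  show ?thesis
    by (rule tendsto_sandwich[OF _ _ l1 tendsto_const]) (use ev in \<open>auto elim: eventually_mono\<close>)
qed

definition U1 :: "real \<Rightarrow> real" where
  "U1 x = 1 / ln ((lam x)^2 - 1) - 1 / (ln (lam x))^2 + 12 / (ln ((lam x)^2))^2"

definition L1 :: "real \<Rightarrow> real" where
  "L1 x = (1 - 1 / (2 * ln (lam x))) * (1 - 1 / (4 * (ln (lam x))^2)) *
     ((1 - 1 / ((lam x)^2 - 1)) * (1 / ln ((lam x)^2) - 1 / ln (exp ((ln (lam x))^2) - 1))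
             - 12 / (ln ((lam x)^2))^2)"

lemma ln_Pr: "lam x \<ge> 0 \<Longrightarrow> ln (Pr x) = (\<Sum>p\<in>Sx x. ln (1 + gx x p))"
proof -
  assume l: "lam x \<ge> 0"
  have h: "1 + gx x p > 0" for p using gx_nonneg[OF l, of p] by linarith
  have h': "1 + gx x p \<noteq> 0" for p using h[of p] by simp
  show ?thesis unfolding Pr_def by (rule ln_prod) (simp_all add: h h')
qed

lemma part2_core:
  assumes gx: "good x"
  shows "lam x * L1 x \<le> ln (Pr x)" "ln (Pr x) \<le> lam x * U1 x"
proof -
  note g = good_basic[OF gx]
  define ell where "ell = ln (lam x)"
  have l3: "ell \<ge> 3" using g by (simp add: ell_def)
  define c0 where "c0 = (1 - 1 / (2 * ell)) * (1 - 1 / (4 * ell^2))"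
  have e2: "ell^2 \<ge> 3^2" by (rule power_mono) (use l3 in auto)
  have c0: "c0 \<ge> 0" unfolding c0_def using l3 e2 by (intro mult_nonneg_nonneg) (auto simp: field_simps)
  have up: "ln (1 + gx x p) \<le> lam x * (1 / (real p * ln (real p)))" if p: "p \<in> Sx x" for p
  proof -
    note pf = pfacts[OF gx p]
    have "ln (1 + gx x p) \<le> gx x p" using gx_nonneg[of x p] g by (intro ln_add_one_self_le_self) auto
    also have "gx x p \<le> r_prime x p / sqrt (real p)"
      unfolding gx_def using tp_le[of x p] g pf by (intro divide_right_mono) auto
    also have "\<dots> = lam x * (1 / (real p * ln (real p)))" using pf(8) by simp
    finally show ?thesis .
  qed
  have lo: "ln (1 + gx x p) \<ge> c0 * (lam x * (1 / (real p * ln (real p))))" if p: "p \<in> Sx x" for p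
  proof -
    note pf = pfacts[OF gx p]
    define rr where "rr = r_prime x p"
    define q where "q = rr / sqrt (real p)"
    have rr0: "rr \<ge> 0" "rr \<le> 1 / (2 * ell)" using pf by (auto simp: rr_def ell_def)
    have sp: "sqrt (real p) \<ge> 1" using pf by simp
    have q0: "q \<ge> 0" "q \<le> rr" unfolding q_def using rr0 sp by (auto simp: divide_le_eq mult_le_cancel_left1)
    have gq: "gx x p = q / (1 + rr^2)" unfolding gx_def tp_def q_def rr_def by simp
    have rr2: "rr^2 \<le> 1 / (4 * ell^2)"
    proof -
      have "rr^2 \<le> (1 / (2 * ell))^2" using rr0 by (intro power_mono) auto
      thus ?thesis by (simp add: power_divide power_mult_distrib)
    qed
    have g0: "gx x p \<ge> 0" using gx_nonneg[of x p] g by simp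
    have gle: "gx x p \<le> 1 / (2 * ell)"
    proof -
      have "gx x p \<le> q" unfolding gq using q0 by (simp add: divide_le_eq mult_le_cancel_left1 add_pos_nonneg)
      thus ?thesis using q0 rr0 by linarith
    qed
    have "gx x p \<ge> q * (1 - rr^2)"
    proof -
      have "q * (1 - rr^2) * (1 + rr^2) = q * (1 - rr^4)" by (simp add: algebra_simps power4_eq_xxxx power2_eq_square)
      also have "\<dots> \<le> q" by (rule mult_left_le) (use q0 rr0 in auto)
      finally show ?thesis unfolding gq by (simp add: le_divide_eq add_pos_nonneg)
    qed
    hence g2: "gx x p \<ge> q * (1 - 1 / (4 * ell^2))"
      using rr2 q0 by (smt (verit) mult_left_mono)
    have "ln (1 / (1 + gx x p)) \<le> 1 / (1 + gx x p) - 1" using g0 by (intro ln_le_minus_one) auto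
    hence A: "ln (1 + gx x p) \<ge> gx x p / (1 + gx x p)" using g0 by (simp add: ln_div field_simps)
    have B: "gx x p / (1 + gx x p) \<ge> gx x p * (1 - gx x p)"
    proof -
      have "gx x p * (1 - gx x p) * (1 + gx x p) \<le> gx x p" using g0 by (simp add: algebra_simps)
      thus ?thesis using g0 by (simp add: le_divide_eq)
    qed
    have C: "gx x p * (1 - gx x p) \<ge> gx x p * (1 - 1 / (2 * ell))"
      using gle g0 by (intro mult_left_mono) auto
    have D: "gx x p * (1 - 1 / (2 * ell)) \<ge> q * (1 - 1 / (4 * ell^2)) * (1 - 1 / (2 * ell))"
      using g2 l3 by (intro mult_right_mono) (auto simp: field_simps)
    have E: "q = lam x * (1 / (real p * ln (real p)))" unfolding q_def rr_def using pf(8) by simp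
    have "c0 * (lam x * (1 / (real p * ln (real p)))) = q * (1 - 1 / (4 * ell^2)) * (1 - 1 / (2 * ell))"
      unfolding c0_def E using l3 pf(2) pf(6) by (simp add: field_simps)
    also have "\<dots> \<le> gx x p * (1 - 1 / (2 * ell))" by (rule D)
    also have "\<dots> \<le> gx x p * (1 - gx x p)" by (rule C)
    also have "\<dots> \<le> gx x p / (1 + gx x p)" by (rule B)
    also have "\<dots> \<le> ln (1 + gx x p)" by (rule A)
    finally show ?thesis .
  qed
  have lnP: "ln (Pr x) = (\<Sum>p\<in>Sx x. ln (1 + gx x p))" using ln_Pr[of x] g by simp
  have "ln (Pr x) \<le> (\<Sum>p\<in>Sx x. lam x * (1 / (real p * ln (real p))))"
    unfolding lnP using g by (intro sum_mono up) auto
  also have "\<dots> = lam x * (\<Sum>p\<in>Sx x. 1 / (real p * ln (real p)))" by (simp add: sum_distrib_left)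
  also have "\<dots> \<le> lam x * U1 x" unfolding U1_def using PS1[OF gx] g by (intro mult_left_mono) auto
  finally show "ln (Pr x) \<le> lam x * U1 x" .
  have "lam x * L1 x = c0 * lam x * ((1 - 1 / ((lam x)^2 - 1)) * (1 / ln ((lam x)^2) - 1 / ln (exp ((ln (lam x))^2) - 1))
             - 12 / (ln ((lam x)^2))^2)"
    unfolding L1_def c0_def ell_def by simp
  also have "\<dots> \<le> c0 * lam x * (\<Sum>p\<in>Sx x. 1 / (real p * ln (real p)))"
    using PS2[OF gx] g c0 by (intro mult_left_mono) auto
  also have "\<dots> = (\<Sum>p\<in>Sx x. c0 * (lam x * (1 / (real p * ln (real p)))))" by (simp add: sum_distrib_left mult_ac)
  also have "\<dots> \<le> ln (Pr x)" unfolding lnP using g by (intro sum_mono lo) auto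
  finally show "lam x * L1 x \<le> ln (Pr x)" .
qed

lemma part2:
  "(\<lambda>x. ln (Pr x)) \<sim>[at_top] (\<lambda>x. lam x / (2 * ln (lam x)))"
proof (rule asymp_equivI')
  have lU: "((\<lambda>x. 2 * ln (lam x) * U1 x) \<longlongrightarrow> 1) at_top" unfolding U1_def lam_def by real_asymp
  have lL: "((\<lambda>x. 2 * ln (lam x) * L1 x) \<longlongrightarrow> 1) at_top" unfolding L1_def lam_def by real_asymp
  have ev: "eventually (\<lambda>x. 2 * ln (lam x) * L1 x \<le> ln (Pr x) / (lam x / (2 * ln (lam x)))
             \<and> ln (Pr x) / (lam x / (2 * ln (lam x))) \<le> 2 * ln (lam x) * U1 x) at_top"
    using ev_good
  proof eventually_elim
    case (elim x)
    note g = good_basic[OF elim] and c = part2_core[OF elim]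
    have "2 * ln (lam x) > 0" using g by linarith
    hence pos: "lam x / (2 * ln (lam x)) > 0" using g by simp
    have eq: "ln (Pr x) / (lam x / (2 * ln (lam x))) = 2 * ln (lam x) * (ln (Pr x) / lam x)"
      using g by (simp add: field_simps)
    have "L1 x \<le> ln (Pr x) / lam x" "ln (Pr x) / lam x \<le> U1 x"
      using c g by (simp_all add: field_simps mult.commute)
    moreover have "2 * ln (lam x) \<ge> 0" using g by linarith
    ultimately have "2 * ln (lam x) * L1 x \<le> 2 * ln (lam x) * (ln (Pr x) / lam x)"
      "2 * ln (lam x) * (ln (Pr x) / lam x) \<le> 2 * ln (lam x) * U1 x"
      by (metis mult_left_mono)+
    thus ?case unfolding eq by simp
  qed
  show "((\<lambda>x. ln (Pr x) / (lam x / (2 * ln (lam x)))) \<longlongrightarrow> 1) at_top"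
    by (rule tendsto_sandwich[OF _ _ lL lU]) (use ev in \<open>auto elim: eventually_mono\<close>)
qed

definition vv :: "real \<Rightarrow> real \<Rightarrow> nat \<Rightarrow> real" where
  "vv x a p = (r_prime x p)^2 * real p powr a"

definition uu :: "real \<Rightarrow> real \<Rightarrow> nat \<Rightarrow> real" where
  "uu x a p = r_prime x p * real p powr (a - 1/2) / (1 + vv x a p)"

lemma vv_nonneg: "vv x a p \<ge> 0"
  by (simp add: vv_def)

lemma uu_nonneg: "lam x \<ge> 0 \<Longrightarrow> uu x a p \<ge> 0"
  using r_prime_nonneg[of x p] vv_nonneg[of x a p] by (simp add: uu_def add_pos_nonneg)

lemma mf_nonneg: "(\<And>p. h p \<ge> 0) \<Longrightarrow> mf h n \<ge> 0"
  unfolding mf_def by (auto intro!: prod_nonneg)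

lemma r_support: "r x m \<noteq> 0 \<Longrightarrow> m \<in> Prod ` Pow (Sx x)"
  unfolding r_mf using mf_support[of "r_prime x" "Sx x" m] r_prime_supp by blast

lemma subset_Sx:
  assumes "A \<subseteq> Sx x"
  shows "finite A" "\<forall>p\<in>A. prime p"
  using assms finite_subset[OF assms finite_Sx] Sx_primes[of x] by auto

lemma infsum_I:
  assumes B: "B \<subseteq> Sx x"
  shows "infsum (\<lambda>d. (r x d)^2 * real d powr a) {d. d \<ge> 1 \<and> coprime d (\<Prod>B)}
           = (\<Prod>p\<in>Sx x - B. 1 + vv x a p)"
proof -
  note fB = subset_Sx[OF B]
  have "infsum (\<lambda>d. (r x d)^2 * real d powr a) {d. d \<ge> 1 \<and> coprime d (\<Prod>B)}
      = (\<Sum>C\<in>{C\<in>Pow (Sx x). coprime (\<Prod>C) (\<Prod>B)}. (r x (\<Prod>C))^2 * real (\<Prod>C) powr a)"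
  proof (rule infsum_support[OF finite_Sx Sx_primes])
    fix m assume "(r x m)^2 * real m powr a \<noteq> 0"
    hence "r x m \<noteq> 0" by auto
    thus "m \<in> Prod ` Pow (Sx x)" by (rule r_support)
  qed
  also have "{C\<in>Pow (Sx x). coprime (\<Prod>C) (\<Prod>B)} = Pow (Sx x - B)"
  proof (rule set_eqI)
    fix C
    show "C \<in> {C\<in>Pow (Sx x). coprime (\<Prod>C) (\<Prod>B)} \<longleftrightarrow> C \<in> Pow (Sx x - B)"
    proof (cases "C \<subseteq> Sx x")
      case True
      note fC = subset_Sx[OF True]
      show ?thesis using coprime_prod_primes[OF fC fB] True by auto
    qed auto
  qed
  also have "(\<Sum>C\<in>Pow (Sx x - B). (r x (\<Prod>C))^2 * real (\<Prod>C) powr a) = (\<Sum>C\<in>Pow (Sx x - B). \<Prod>p\<in>C. vv x a p)"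
  proof (intro sum.cong refl)
    fix C assume "C \<in> Pow (Sx x - B)"
    hence "C \<subseteq> Sx x" by auto
    note fC = subset_Sx[OF this]
    show "(r x (\<Prod>C))^2 * real (\<Prod>C) powr a = (\<Prod>p\<in>C. vv x a p)"
      unfolding r_mf mf_prod[OF fC] powr_prod_nat vv_def by (simp add: prod.distrib prod_power_distrib)
  qed
  also have "\<dots> = (\<Prod>p\<in>Sx x - B. 1 + vv x a p)" by (rule pow_sum_prod) simp
  finally show ?thesis .
qed

lemma infsum_W:
  "infsum (\<lambda>d. (r x d)^2) {d. d \<ge> 1} = (\<Prod>p\<in>Sx x. 1 + (r_prime x p)^2)"
proof -
  have "infsum (\<lambda>d. (r x d)^2) {d. d \<ge> 1 \<and> True}
      = (\<Sum>C\<in>{C\<in>Pow (Sx x). True}. (r x (\<Prod>C))^2)"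
  proof (rule infsum_support[OF finite_Sx Sx_primes])
    fix m assume "(r x m)^2 \<noteq> 0"
    hence "r x m \<noteq> 0" by auto
    thus "m \<in> Prod ` Pow (Sx x)" by (rule r_support)
  qed
  also have "{C\<in>Pow (Sx x). True} = Pow (Sx x)" by auto
  also have "(\<Sum>C\<in>Pow (Sx x). (r x (\<Prod>C))^2) = (\<Sum>C\<in>Pow (Sx x). \<Prod>p\<in>C. (r_prime x p)^2)"
  proof (intro sum.cong refl)
    fix C assume "C \<in> Pow (Sx x)"
    hence "C \<subseteq> Sx x" by auto
    note fC = subset_Sx[OF this]
    show "(r x (\<Prod>C))^2 = (\<Prod>p\<in>C. (r_prime x p)^2)"
      unfolding r_mf mf_prod[OF fC] by (simp add: prod_power_distrib)
  qed
  also have "\<dots> = (\<Prod>p\<in>Sx x. 1 + (r_prime x p)^2)" by (rule pow_sum_prod) simp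
  finally show ?thesis by simp
qed

lemma T_bound:
  assumes l: "lam x \<ge> 0" and m: "m1 \<ge> 1" "m2 \<ge> 1" "coprime m1 m2"
  shows "r x m1 * r x m2 / (real (m1 * m2)) powr (1/2 - a) *
           infsum (\<lambda>d. (r x d)^2 * real d powr a) {d. d \<ge> 1 \<and> coprime d (m1 * m2)}
         \<le> (\<Prod>p\<in>Sx x. 1 + vv x a p) * (mf (uu x a) m1 * mf (uu x a) m2)"
proof (cases "r x m1 = 0 \<or> r x m2 = 0")
  case True
  have "0 \<le> (\<Prod>p\<in>Sx x. 1 + vv x a p) * (mf (uu x a) m1 * mf (uu x a) m2)"
    using vv_nonneg uu_nonneg[OF l] by (intro mult_nonneg_nonneg prod_nonneg mf_nonneg) (auto intro: add_nonneg_nonneg)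
  thus ?thesis using True by auto
next
  case False
  obtain A where A: "A \<subseteq> Sx x" "m1 = \<Prod>A" using r_support[of x m1] False by auto
  obtain B where B: "B \<subseteq> Sx x" "m2 = \<Prod>B" using r_support[of x m2] False by auto
  note fA = subset_Sx[OF A(1)] and fB = subset_Sx[OF B(1)]
  have disj: "A \<inter> B = {}" using coprime_prod_primes[OF fA fB] m(3) A B by simp
  have AB: "A \<union> B \<subseteq> Sx x" using A B by auto
  note fAB = subset_Sx[OF AB]
  define hh where "hh p = r_prime x p * real p powr (a - 1/2)" for p
  define w where "w p = 1 + vv x a p" for p
  have w0: "w p > 0" for p unfolding w_def using vv_nonneg[of x a p] by linarith
  have uuw: "uu x a p = hh p / w p" for p unfolding uu_def hh_def w_def by simp
  have m12: "m1 * m2 = \<Prod>(A \<union> B)" using A B disj fA fB by (simp add: prod.union_disjoint)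
  have I: "infsum (\<lambda>d. (r x d)^2 * real d powr a) {d. d \<ge> 1 \<and> coprime d (m1 * m2)}
         = (\<Prod>p\<in>Sx x - (A \<union> B). w p)"
    unfolding m12 w_def by (rule infsum_I[OF AB])
  have rr: "r x m1 * r x m2 / (real (m1 * m2)) powr (1/2 - a) = (\<Prod>p\<in>A. hh p) * (\<Prod>p\<in>B. hh p)"
  proof -
    have hq: "hh p = r_prime x p / real p powr (1/2 - a)" for p
    proof -
      have "real p powr (a - 1/2) = real p powr (- (1/2 - a))" by simp
      also have "\<dots> = 1 / real p powr (1/2 - a)" by (rule powr_minus_divide)
      finally show ?thesis unfolding hh_def by simp
    qed
    have "real (m1 * m2) powr (1/2 - a) = real m1 powr (1/2 - a) * real m2 powr (1/2 - a)"
      by (simp add: powr_mult)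
    hence "r x m1 * r x m2 / (real (m1 * m2)) powr (1/2 - a)
        = (r x m1 / real m1 powr (1/2 - a)) * (r x m2 / real m2 powr (1/2 - a))" by simp
    also have "r x m1 / real m1 powr (1/2 - a) = (\<Prod>p\<in>A. hh p)"
      unfolding A(2) r_mf mf_prod[OF fA] powr_prod_nat hq by (simp add: prod_dividef)
    also have "r x m2 / real m2 powr (1/2 - a) = (\<Prod>p\<in>B. hh p)"
      unfolding B(2) r_mf mf_prod[OF fB] powr_prod_nat hq by (simp add: prod_dividef)
    finally show ?thesis .
  qed
  have V: "(\<Prod>p\<in>Sx x. 1 + vv x a p) = (\<Prod>p\<in>Sx x - (A \<union> B). w p) * ((\<Prod>p\<in>A. w p) * (\<Prod>p\<in>B. w p))"
  proof -
    have "(\<Prod>p\<in>Sx x. 1 + vv x a p) = (\<Prod>p\<in>Sx x. w p)" by (simp add: w_def)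
    also have "\<dots> = (\<Prod>p\<in>Sx x - (A \<union> B). w p) * (\<Prod>p\<in>A \<union> B. w p)"
      by (rule prod.subset_diff[OF AB finite_Sx])
    also have "(\<Prod>p\<in>A \<union> B. w p) = (\<Prod>p\<in>A. w p) * (\<Prod>p\<in>B. w p)"
      using fA fB disj by (simp add: prod.union_disjoint)
    finally show ?thesis .
  qed
  have F1: "mf (uu x a) m1 = (\<Prod>p\<in>A. hh p) / (\<Prod>p\<in>A. w p)"
    unfolding A(2) mf_prod[OF fA] uuw by (simp add: prod_dividef)
  have F2: "mf (uu x a) m2 = (\<Prod>p\<in>B. hh p) / (\<Prod>p\<in>B. w p)"
    unfolding B(2) mf_prod[OF fB] uuw by (simp add: prod_dividef)
  have pA: "(\<Prod>p\<in>A. w p) > 0" and pB: "(\<Prod>p\<in>B. w p) > 0" using w0 by (auto intro: prod_pos)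
  have "r x m1 * r x m2 / (real (m1 * m2)) powr (1/2 - a) *
           infsum (\<lambda>d. (r x d)^2 * real d powr a) {d. d \<ge> 1 \<and> coprime d (m1 * m2)}
      = (\<Prod>p\<in>Sx x. 1 + vv x a p) * (mf (uu x a) m1 * mf (uu x a) m2)"
    unfolding rr I V F1 F2 using pA pB by (simp add: field_simps)
  thus ?thesis by simp
qed

lemma uu_supp: "uu x a p \<noteq> 0 \<Longrightarrow> p \<in> Sx x"
  by (auto simp: uu_def intro: r_prime_supp)

lemma sumF_bound:
  assumes l: "lam x \<ge> 0"
  shows "(\<Sum>m\<in>{1..N}. mf (uu x a) m) \<le> (\<Prod>p\<in>Sx x. 1 + uu x a p)"
proof -
  have "(\<Sum>m\<in>{1..N}. mf (uu x a) m) = (\<Sum>A\<in>{A\<in>Pow (Sx x). \<Prod>A \<le> N}. mf (uu x a) (\<Prod>A))"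
  proof (rule sum_support[OF finite_Sx Sx_primes])
    fix m assume "mf (uu x a) m \<noteq> 0"
    thus "m \<in> Prod ` Pow (Sx x)" using mf_support[of "uu x a" "Sx x" m] uu_supp by blast
  qed
  also have "\<dots> = (\<Sum>A\<in>{A\<in>Pow (Sx x). \<Prod>A \<le> N}. \<Prod>p\<in>A. uu x a p)"
    by (intro sum.cong refl mf_prod) (auto dest: subset_Sx)
  also have "\<dots> \<le> (\<Sum>A\<in>Pow (Sx x). \<Prod>p\<in>A. uu x a p)"
    using uu_nonneg[OF l] by (intro sum_mono2 prod_nonneg) auto
  also have "\<dots> = (\<Prod>p\<in>Sx x. 1 + uu x a p)" by (rule pow_sum_prod) simp
  finally show ?thesis .
qed

lemma num_bound:
  assumes l: "lam x \<ge> 0"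
  shows "(\<Sum>(m1, m2)\<in>{(m1, m2). m1 \<in> {1..N} \<and> m2 \<in> {1..N} \<and> coprime m1 m2}.
            r x m1 * r x m2 / (real (m1 * m2)) powr (1/2 - a) *
            infsum (\<lambda>d. (r x d)^2 * real d powr a) {d. d \<ge> 1 \<and> coprime d (m1 * m2)})
         \<le> (\<Prod>p\<in>Sx x. 1 + vv x a p) * (\<Prod>p\<in>Sx x. 1 + uu x a p)^2"
proof -
  define V where "V = (\<Prod>p\<in>Sx x. 1 + vv x a p)"
  define F where "F = mf (uu x a)"
  define Q where "Q = {(m1, m2). m1 \<in> {1..N} \<and> m2 \<in> {1..N} \<and> coprime m1 m2}"
  have V0: "V \<ge> 0" unfolding V_def using vv_nonneg by (intro prod_nonneg) (auto intro: add_nonneg_nonneg)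
  have F0: "F m \<ge> 0" for m unfolding F_def using uu_nonneg[OF l] by (intro mf_nonneg) auto
  have QS: "Q \<subseteq> {1..N} \<times> {1..N}" unfolding Q_def by auto
  have "(\<Sum>(m1, m2)\<in>Q. r x m1 * r x m2 / (real (m1 * m2)) powr (1/2 - a) *
            infsum (\<lambda>d. (r x d)^2 * real d powr a) {d. d \<ge> 1 \<and> coprime d (m1 * m2)})
      \<le> (\<Sum>(m1, m2)\<in>Q. V * (F m1 * F m2))"
  proof (intro sum_mono)
    fix q assume "q \<in> Q"
    then obtain m1 m2 where q: "q = (m1, m2)" "m1 \<ge> 1" "m2 \<ge> 1" "coprime m1 m2" unfolding Q_def by auto
    show "(case q of (m1, m2) \<Rightarrow> r x m1 * r x m2 / (real (m1 * m2)) powr (1/2 - a) *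
            infsum (\<lambda>d. (r x d)^2 * real d powr a) {d. d \<ge> 1 \<and> coprime d (m1 * m2)})
          \<le> (case q of (m1, m2) \<Rightarrow> V * (F m1 * F m2))"
      unfolding q(1) V_def F_def using T_bound[OF l q(2-4)] by simp
  qed
  also have "\<dots> \<le> (\<Sum>(m1, m2)\<in>{1..N} \<times> {1..N}. V * (F m1 * F m2))"
    using QS V0 F0 by (intro sum_mono2) auto
  also have "\<dots> = (\<Sum>m1\<in>{1..N}. \<Sum>m2\<in>{1..N}. V * (F m1 * F m2))"
    by (rule sum.cartesian_product[symmetric])
  also have "\<dots> = V * ((\<Sum>m\<in>{1..N}. F m) * (\<Sum>m\<in>{1..N}. F m))"
    by (simp add: sum_distrib_left sum_distrib_right mult_ac)
  also have "\<dots> \<le> V * ((\<Prod>p\<in>Sx x. 1 + uu x a p) * (\<Prod>p\<in>Sx x. 1 + uu x a p))"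
  proof -
    have s0: "(\<Sum>m\<in>{1..N}. F m) \<ge> 0" using F0 by (intro sum_nonneg) auto
    have s1: "(\<Sum>m\<in>{1..N}. F m) \<le> (\<Prod>p\<in>Sx x. 1 + uu x a p)" unfolding F_def by (rule sumF_bound[OF l])
    show ?thesis using s0 s1 V0 by (intro mult_left_mono mult_mono) auto
  qed
  finally show ?thesis unfolding Q_def V_def by (simp add: power2_eq_square)
qed

lemma powr_a_facts:
  assumes gx: "good x" and p: "p \<in> Sx x" and a: "a = 1 / (ln (lam x))^3"
  shows "real p powr a \<ge> 1" "real p powr a - 1 \<le> a * ln (real p) + (a * ln (real p))^2"
        "a * ln (real p) \<le> 1" "a * ln (real p) \<ge> 0" "a \<ge> 0"
proof -
  note g = good_basic[OF gx] and pf = pfacts[OF gx p]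
  show a0: "a \<ge> 0" unfolding a using g(2) by (intro divide_nonneg_nonneg zero_le_power) auto
  show y0: "a * ln (real p) \<ge> 0" using a0 pf by simp
  have "a * ln (real p) \<le> a * (ln (lam x))^2" using pf a0 by (intro mult_left_mono) auto
  also have "\<dots> = 1 / ln (lam x)" unfolding a using g(2) by (simp add: power2_eq_square power3_eq_cube)
  also have "\<dots> \<le> 1" using g(2) by simp
  finally show y1: "a * ln (real p) \<le> 1" .
  show "real p powr a \<ge> 1" using pf a0 by (intro ge_one_powr_ge_zero) auto
  have "real p powr a = exp (a * ln (real p))" using pf by (simp add: powr_def mult.commute)
  thus "real p powr a - 1 \<le> a * ln (real p) + (a * ln (real p))^2"
    using exp_m1_le2[OF y0 y1] by simp
qed

lemma V_bound:
  assumes gx: "good x" and a: "a = 1 / (ln (lam x))^3"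
  shows "(\<Prod>p\<in>Sx x. 1 + vv x a p)
          \<le> (\<Prod>p\<in>Sx x. 1 + (r_prime x p)^2) * exp ((lam x)^2 * a * U1 x + (lam x)^2 * a^2 * SPB x)"
proof -
  note g = good_basic[OF gx]
  have a0: "a \<ge> 0" unfolding a using g(2) by (intro divide_nonneg_nonneg zero_le_power) auto
  have "(\<Prod>p\<in>Sx x. 1 + vv x a p) \<le> (\<Prod>p\<in>Sx x. 1 + (r_prime x p)^2) * exp (\<Sum>p\<in>Sx x. vv x a p - (r_prime x p)^2)"
  proof (rule prod_ratio_exp[OF finite_Sx], intro ballI conjI)
    fix p assume p: "p \<in> Sx x"
    show "0 \<le> (r_prime x p)^2" by simp
    show "(r_prime x p)^2 \<le> vv x a p" unfolding vv_def
      using powr_a_facts(1)[OF gx p a] by (simp add: mult_le_cancel_left1)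
  qed
  also have "(\<Sum>p\<in>Sx x. vv x a p - (r_prime x p)^2)
      \<le> (\<Sum>p\<in>Sx x. (lam x)^2 * a * (1 / (real p * ln (real p))) + (lam x)^2 * a^2 * (1 / real p))"
  proof (intro sum_mono)
    fix p assume p: "p \<in> Sx x"
    note pf = pfacts[OF gx p] and pa = powr_a_facts[OF gx p a]
    have "vv x a p - (r_prime x p)^2 = (r_prime x p)^2 * (real p powr a - 1)" unfolding vv_def by (simp add: algebra_simps)
    also have "\<dots> \<le> (r_prime x p)^2 * (a * ln (real p) + (a * ln (real p))^2)"
      using pa by (intro mult_left_mono) auto
    also have "\<dots> = (lam x)^2 * a * (1 / (real p * ln (real p))) + (lam x)^2 * a^2 * (1 / real p)"
      unfolding pf(9) using pf(2) pf(6) by (simp add: field_simps power2_eq_square)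
    finally show "vv x a p - (r_prime x p)^2 \<le> (lam x)^2 * a * (1 / (real p * ln (real p))) + (lam x)^2 * a^2 * (1 / real p)" .
  qed
  also have "\<dots> = (lam x)^2 * a * (\<Sum>p\<in>Sx x. 1 / (real p * ln (real p))) + (lam x)^2 * a^2 * (\<Sum>p\<in>Sx x. 1 / real p)"
    by (simp add: sum.distrib sum_distrib_left)
  also have "\<dots> \<le> (lam x)^2 * a * U1 x + (lam x)^2 * a^2 * SPB x"
    unfolding U1_def SPB_def using PS1[OF gx] PS3[OF gx] a0
    by (intro add_mono mult_left_mono) auto
  finally show ?thesis
    by (smt (verit, best) exp_le_cancel_iff mult_left_mono prod_nonneg zero_le_power2)
qed

lemma U_bound:
  assumes gx: "good x" and a: "a = 1 / (ln (lam x))^3"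
  shows "(\<Prod>p\<in>Sx x. 1 + uu x a p) \<le> Pr x * exp (2 * lam x * a * SPB x)"
proof -
  note g = good_basic[OF gx]
  have a0: "a \<ge> 0" unfolding a using g(2) by (intro divide_nonneg_nonneg zero_le_power) auto
  have key: "gx x p \<le> uu x a p \<and> uu x a p - gx x p \<le> 2 * lam x * a * (1 / real p)" if p: "p \<in> Sx x" for p
  proof -
    note pf = pfacts[OF gx p] and pa = powr_a_facts[OF gx p a]
    define s where "s = real p powr a"
    define c where "c = (r_prime x p)^2"
    define k where "k = r_prime x p / sqrt (real p)"
    have s1: "s \<ge> 1" using pa by (simp add: s_def)
    have c0: "c \<ge> 0" by (simp add: c_def)
    have k0: "k \<ge> 0" unfolding k_def by (rule divide_nonneg_nonneg[OF pf(11)]) simp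
    have sq: "sqrt (real p) > 0" using pf by simp
    have pw: "real p powr (a - 1/2) = s / sqrt (real p)"
      unfolding s_def using pf by (simp add: powr_diff powr_half_sqrt)
    have u: "uu x a p = k * s / (1 + c * s)"
      unfolding uu_def vv_def pw s_def[symmetric] c_def[symmetric] k_def by (simp add: mult.commute)
    have gg: "gx x p = k / (1 + c)"
      unfolding gx_def tp_def c_def[symmetric] k_def by simp
    have d1: "1 + c * s > 0" "1 + c > 0" using c0 s1 by (auto intro: add_pos_nonneg)
    have diff: "uu x a p - gx x p = k * (s - 1) / ((1 + c * s) * (1 + c))"
      unfolding u gg using d1 by (simp add: field_simps)
    have e1: "1 + c * s \<ge> 1" using c0 s1 by simp
    have e2: "1 + c \<ge> 1" using c0 by simp
    have dge: "(1 + c * s) * (1 + c) \<ge> 1" using mult_mono[OF e1 e2] e1 by simp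
    have ks0: "k * (s - 1) \<ge> 0" using k0 s1 by simp
    have A: "uu x a p - gx x p \<ge> 0" unfolding diff using ks0 d1 by simp
    have "uu x a p - gx x p \<le> k * (s - 1)"
      unfolding diff using ks0 dge by (simp add: divide_le_eq mult_le_cancel_left1)
    also have "\<dots> \<le> k * (a * ln (real p) + (a * ln (real p))^2)" using pa k0 unfolding s_def by (intro mult_left_mono) auto
    also have "\<dots> \<le> k * (2 * (a * ln (real p)))"
    proof -
      have "(a * ln (real p))^2 \<le> a * ln (real p)" using mult_left_le[OF pa(3) pa(4)] by (simp add: power2_eq_square)
      thus ?thesis using k0 by (intro mult_left_mono) auto
    qed
    also have "\<dots> = 2 * lam x * a * (1 / real p)" unfolding k_def pf(8) using pf(2) pf(6) by (simp add: field_simps)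
    finally show ?thesis using A by simp
  qed
  have "(\<Prod>p\<in>Sx x. 1 + uu x a p) \<le> (\<Prod>p\<in>Sx x. 1 + gx x p) * exp (\<Sum>p\<in>Sx x. uu x a p - gx x p)"
    using key gx_nonneg[of x] g by (intro prod_ratio_exp[OF finite_Sx]) auto
  also have "(\<Sum>p\<in>Sx x. uu x a p - gx x p) \<le> (\<Sum>p\<in>Sx x. 2 * lam x * a * (1 / real p))"
    using key by (intro sum_mono) auto
  also have "\<dots> = 2 * lam x * a * (\<Sum>p\<in>Sx x. 1 / real p)" by (simp add: sum_distrib_left)
  also have "\<dots> \<le> 2 * lam x * a * SPB x"
    unfolding SPB_def using PS3[OF gx] a0 g by (intro mult_left_mono) auto
  finally show ?thesis unfolding Pr_def
    by (smt (verit, best) exp_le_cancel_iff mult_left_mono prod_nonneg gx_nonneg g(1))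
qed

lemma Pr_eq: "(\<Prod>p\<in>{p. prime p \<and> real p \<le> exp ((ln (lam x))^2)}. (1 + t x p / sqrt (real p))) = Pr x"
  unfolding Pr_def by (rule prod_P_eq)

lemma E_asymp: "eventually (\<lambda>x::real.
  - (1 / (ln (lam x))^3) * ln x + (lam x)^2 * (1 / (ln (lam x))^3) * U1 x
    + (lam x)^2 * (1 / (ln (lam x))^3)^2 * SPB x + 2 * (2 * lam x * (1 / (ln (lam x))^3) * SPB x) + 2 * ln 2
     \<le> - 32 * ln x / (ln (ln x))^4) at_top"
  unfolding U1_def SPB_def lam_def by real_asymp

lemma part3:
  fixes z :: "real \<Rightarrow> real"
  assumes z: "\<forall>\<^sub>F x in at_top. z x > exp (3 * lam x * ln (ln (lam x)))"
  shows "\<forall>\<^sub>F x in at_top.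
            let \<alpha> = 1 / (ln (lam x))^3 in
            x powr (- \<alpha>) *
              (\<Sum>(m1, m2)\<in>{(m1, m2). m1 \<in> {1..nat \<lfloor>z x\<rfloor>} \<and> m2 \<in> {1..nat \<lfloor>z x\<rfloor>} \<and> coprime m1 m2}.
                 r x m1 * r x m2 / (real (m1 * m2)) powr (1/2 - \<alpha>) *
                 infsum (\<lambda>d. (r x d)^2 * real d powr \<alpha>) {d. d \<ge> 1 \<and> coprime d (m1 * m2)})
            / ((\<Sum>m\<in>{1..nat \<lfloor>x\<rfloor>}. t x m / sqrt (real m))^2 * infsum (\<lambda>d. (r x d)^2) {d. d \<ge> 1})
            \<le> exp (- (1 + 0) * 32 * ln x / (ln (ln x))^4)"
proof -
  have zx: "\<forall>\<^sub>F x in at_top. id x > exp (3 * lam x * ln (ln (lam x)))"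
    unfolding lam_def id_def by real_asymp
  have "((\<lambda>x. (\<Sum>m\<in>{1..nat \<lfloor>id x\<rfloor>}. t x m / sqrt (real m)) / Pr x) \<longlongrightarrow> 1) at_top"
    by (rule part1_ratio[OF zx])
  hence "eventually (\<lambda>x. (\<Sum>m\<in>{1..nat \<lfloor>id x\<rfloor>}. t x m / sqrt (real m)) / Pr x > 1/2) at_top"
    by (rule order_tendstoD) simp
  hence half: "eventually (\<lambda>x. (\<Sum>m\<in>{1..nat \<lfloor>x\<rfloor>}. t x m / sqrt (real m)) / Pr x > 1/2) at_top" by simp
  have xpos: "eventually (\<lambda>x::real. x > 0) at_top" by real_asymp
  show ?thesis unfolding Let_def using ev_good half xpos E_asymp
  proof eventually_elim
    case (elim x)
    note gx = elim(1) and g = good_basic[OF elim(1)]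
    define a where "a = 1 / (ln (lam x))^3"
    define Num where "Num = (\<Sum>(m1, m2)\<in>{(m1, m2). m1 \<in> {1..nat \<lfloor>z x\<rfloor>} \<and> m2 \<in> {1..nat \<lfloor>z x\<rfloor>} \<and> coprime m1 m2}.
                 r x m1 * r x m2 / (real (m1 * m2)) powr (1/2 - a) *
                 infsum (\<lambda>d. (r x d)^2 * real d powr a) {d. d \<ge> 1 \<and> coprime d (m1 * m2)})"
    define D where "D = (\<Sum>m\<in>{1..nat \<lfloor>x\<rfloor>}. t x m / sqrt (real m))"
    define W where "W = (\<Prod>p\<in>Sx x. 1 + (r_prime x p)^2)"
    define V where "V = (\<Prod>p\<in>Sx x. 1 + vv x a p)"
    define U where "U = (\<Prod>p\<in>Sx x. 1 + uu x a p)"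
    define X1 where "X1 = (lam x)^2 * a * U1 x + (lam x)^2 * a^2 * SPB x"
    define X2 where "X2 = 2 * lam x * a * SPB x"
    have P1: "Pr x \<ge> 1" using Pr_ge1 g by simp
    have W1: "W \<ge> 1" unfolding W_def by (intro prod_ge_1) auto
    have V0: "V \<ge> 0" unfolding V_def using vv_nonneg by (intro prod_nonneg) (auto intro: add_nonneg_nonneg)
    have U0: "U \<ge> 0" unfolding U_def using uu_nonneg g by (intro prod_nonneg) (auto intro: add_nonneg_nonneg)
    have Dh: "D \<ge> Pr x / 2" using elim(2) P1 unfolding D_def by (simp add: field_simps)
    have num: "Num \<le> V * U^2" unfolding Num_def V_def U_def using num_bound g by simp
    have Vb: "V \<le> W * exp X1" unfolding V_def W_def X1_def using V_bound[OF gx a_def] .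
    have Ub: "U \<le> Pr x * exp X2" unfolding U_def X2_def using U_bound[OF gx a_def] .
    have "U^2 \<le> (Pr x * exp X2)^2" using Ub U0 by (intro power_mono) auto
    hence "V * U^2 \<le> (W * exp X1) * (Pr x * exp X2)^2"
      using Vb V0 U0 W1 by (intro mult_mono) auto
    with num have numb: "Num \<le> (W * exp X1) * (Pr x * exp X2)^2" by linarith
    have Wi: "infsum (\<lambda>d. (r x d)^2) {d. d \<ge> 1} = W" unfolding W_def by (rule infsum_W)
    have den: "D^2 * W \<ge> (Pr x / 2)^2 * W"
      using Dh P1 W1 by (intro mult_right_mono power_mono) auto
    have den0: "(Pr x / 2)^2 * W > 0" using P1 W1 by simp
    have xa: "x powr (- a) = exp (- a * ln x)" using elim(3) by (simp add: powr_def)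
    have xa0: "x powr (- a) \<ge> 0" by simp
    have "x powr (- a) * Num / (D^2 * W) \<le> x powr (- a) * ((W * exp X1) * (Pr x * exp X2)^2) / ((Pr x / 2)^2 * W)"
      using numb den den0 xa0 W1 by (intro frac_le mult_left_mono mult_nonneg_nonneg) auto
    also have "\<dots> = exp (- a * ln x + X1 + 2 * X2 + 2 * ln 2)"
    proof -
      have e4: "exp (2 * ln 2) = (4::real)"
      proof -
        have "exp (2 * ln 2) = exp (ln 2 + ln (2::real))" by simp
        also have "\<dots> = 4" by (simp only: exp_add exp_ln_iff) simp
        finally show ?thesis .
      qed
      have e2: "exp (2 * X2) = (exp X2)^2"
      proof -
        have "exp (2 * X2) = exp (X2 + X2)" by simp
        thus ?thesis by (simp only: exp_add power2_eq_square)
      qed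
      have "exp (- a * ln x + X1 + 2 * X2 + 2 * ln 2) = exp (- a * ln x) * exp X1 * exp (2 * X2) * exp (2 * ln 2)"
        by (simp only: exp_add)
      also have "\<dots> = x powr (- a) * exp X1 * (exp X2)^2 * 4" unfolding e2 e4 xa ..
      also have "\<dots> = x powr (- a) * ((W * exp X1) * (Pr x * exp X2)^2) / ((Pr x / 2)^2 * W)"
        using P1 W1 by (simp add: field_simps power2_eq_square)
      finally show ?thesis by simp
    qed
    also have "\<dots> \<le> exp (- (1 + 0) * 32 * ln x / (ln (ln x))^4)"
      using elim(4) unfolding X1_def X2_def a_def by simp
    finally show ?case unfolding Num_def D_def Wi[symmetric] a_def by simp
  qed
qed

theorem mainTheorem12:
  shows
   "(\<forall>z :: real \<Rightarrow> real.
       (\<forall>\<^sub>F x in at_top. z x > exp (3 * lam x * ln (ln (lam x)))) \<longrightarrow>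
       (\<lambda>x. \<Sum>m\<in>{1..nat \<lfloor>z x\<rfloor>}. t x m / sqrt (real m))
         \<sim>[at_top]
       (\<lambda>x. \<Prod>p\<in>{p. prime p \<and> real p \<le> exp ((ln (lam x))^2)}. (1 + t x p / sqrt (real p))))
  \<and> (\<lambda>x. ln (\<Prod>p\<in>{p. prime p \<and> real p \<le> exp ((ln (lam x))^2)}. (1 + t x p / sqrt (real p))))
       \<sim>[at_top] (\<lambda>x. lam x / (2 * ln (lam x)))
  \<and> (\<forall>z :: real \<Rightarrow> real.
       (\<forall>\<^sub>F x in at_top. z x > exp (3 * lam x * ln (ln (lam x)))) \<longrightarrow>
       (\<exists>\<epsilon> :: real \<Rightarrow> real. (\<epsilon> \<longlongrightarrow> 0) at_top \<and>
          (\<forall>\<^sub>F x in at_top.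
            let \<alpha> = 1 / (ln (lam x))^3 in
            x powr (- \<alpha>) *
              (\<Sum>(m1, m2)\<in>{(m1, m2). m1 \<in> {1..nat \<lfloor>z x\<rfloor>} \<and> m2 \<in> {1..nat \<lfloor>z x\<rfloor>} \<and> coprime m1 m2}.
                 r x m1 * r x m2 / (real (m1 * m2)) powr (1/2 - \<alpha>) *
                 infsum (\<lambda>d. (r x d)^2 * real d powr \<alpha>) {d. d \<ge> 1 \<and> coprime d (m1 * m2)})
            / ((\<Sum>m\<in>{1..nat \<lfloor>x\<rfloor>}. t x m / sqrt (real m))^2 * infsum (\<lambda>d. (r x d)^2) {d. d \<ge> 1})
            \<le> exp (- (1 + \<epsilon> x) * 32 * ln x / (ln (ln x))^4))))"
proof (intro conjI allI impI)
  fix z :: "real \<Rightarrow> real"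
  assume z: "\<forall>\<^sub>F x in at_top. z x > exp (3 * lam x * ln (ln (lam x)))"
  show "(\<lambda>x. \<Sum>m\<in>{1..nat \<lfloor>z x\<rfloor>}. t x m / sqrt (real m))
         \<sim>[at_top] (\<lambda>x. \<Prod>p\<in>{p. prime p \<and> real p \<le> exp ((ln (lam x))^2)}. (1 + t x p / sqrt (real p)))"
    unfolding Pr_eq by (rule asymp_equivI') (rule part1_ratio[OF z])
next
  show "(\<lambda>x. ln (\<Prod>p\<in>{p. prime p \<and> real p \<le> exp ((ln (lam x))^2)}. (1 + t x p / sqrt (real p))))
       \<sim>[at_top] (\<lambda>x. lam x / (2 * ln (lam x)))"
    unfolding Pr_eq by (rule part2)
next
  fix z :: "real \<Rightarrow> real"
  assume z: "\<forall>\<^sub>F x in at_top. z x > exp (3 * lam x * ln (ln (lam x)))"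
  show "\<exists>\<epsilon> :: real \<Rightarrow> real. (\<epsilon> \<longlongrightarrow> 0) at_top \<and>
          (\<forall>\<^sub>F x in at_top.
            let \<alpha> = 1 / (ln (lam x))^3 in
            x powr (- \<alpha>) *
              (\<Sum>(m1, m2)\<in>{(m1, m2). m1 \<in> {1..nat \<lfloor>z x\<rfloor>} \<and> m2 \<in> {1..nat \<lfloor>z x\<rfloor>} \<and> coprime m1 m2}.
                 r x m1 * r x m2 / (real (m1 * m2)) powr (1/2 - \<alpha>) *
                 infsum (\<lambda>d. (r x d)^2 * real d powr \<alpha>) {d. d \<ge> 1 \<and> coprime d (m1 * m2)})
            / ((\<Sum>m\<in>{1..nat \<lfloor>x\<rfloor>}. t x m / sqrt (real m))^2 * infsum (\<lambda>d. (r x d)^2) {d. d \<ge> 1})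
            \<le> exp (- (1 + \<epsilon> x) * 32 * ln x / (ln (ln x))^4))"
    by (rule exI[of _ "\<lambda>_. 0"]) (use part3[OF z] in simp)
qed

end
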